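(* Let $G$ be a compact Lie group, $H$ a closed subgroup, $V$ a finite-dimensional orthogonal representation of $H$, and $\sigma\in\mathcal R_G([H])$. Then $\mathrm{sym}_{H,\sigma}(V)$ is a submanifold of $\mathrm{sym}_H(V)$ of codimension $d(\sigma)$. Moreover, if $s\in\mathrm{sym}_{H,\sigma}(V)$, $L\subseteq\mathrm{sym}_H(V)$ is a linear subspace, and $\Pi:V\to\ker s$ is the orthogonal projection, then $s+L$ is transverse to $\mathrm{sym}_{H,\sigma}(V)$ if and only if the map $\varphi:L\to\mathrm{sym}_H(\ker s)$, $\varphi(l)(x)=\Pi(l(x))$, is surjective.
   Context: $\mathcal R_G$ is the set of isomorphism classes of $(K,W,\rho)$ with $K$ a closed subgroup of $G$ and $\rho$ a finite-dimensional real representation of $K$, where $(K,W,\rho)\cong(K',W',\rho')$ iff $K'=gKg^{-1}$ and $\rho'(gkg^{-1})=\varphi\rho(k)\varphi^{-1}$ for some $g\in G$ and linear iso $\varphi$; $\mathcal R_G([H])$ is the set of classes represented by representations of $H$. For an orthogonal $H$-representation $W$, $\mathrm{sym}_H(W)$ is the space of $H$-equivariant symmetric linear maps $W\to W$. $\mathrm{sym}_{H,\sigma}(V)$ is the set of $s\in\mathrm{sym}_H(V)$ with $\ker s$ (as an $H$-representation) representing $\sigma$. For $\sigma$ represented by $(K,W)$, $d(\sigma)=\dim_{\mathbb R}\mathrm{sym}_K(W)$ (independent of choices). *)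

theory Defs
  imports "HOL-Analysis.Analysis"
begin

definition matrix_group :: "(real^'n^'n) set \<Rightarrow> bool" where
  "matrix_group G \<longleftrightarrow> mat 1 \<in> G \<and>
     (\<forall>a\<in>G. invertible a \<and> matrix_inv a \<in> G) \<and> (\<forall>a\<in>G. \<forall>b\<in>G. a ** b \<in> G)"

(* a compact Lie group, realised as a compact subgroup of GL_n(R) *)
definition compact_lie_group :: "(real^'n^'n) set \<Rightarrow> bool" where
  "compact_lie_group G \<longleftrightarrow> matrix_group G \<and> compact G"

definition closed_subgroup :: "(real^'n^'n) set \<Rightarrow> (real^'n^'n) set \<Rightarrow> bool" where
  "closed_subgroup H G \<longleftrightarrow> H \<subseteq> G \<and> matrix_group H \<and> closed H"

definition is_rep :: "(real^'n^'n) set \<Rightarrow> 'w::euclidean_space set \<Rightarrow> (real^'n^'n \<Rightarrow> 'w \<Rightarrow> 'w) \<Rightarrow> bool" where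
  "is_rep K W \<rho> \<longleftrightarrow> subspace W \<and>
     (\<forall>k\<in>K. \<forall>x\<in>W. \<rho> k x \<in> W) \<and>
     (\<forall>k\<in>K. \<forall>x\<in>W. \<forall>y\<in>W. \<rho> k (x + y) = \<rho> k x + \<rho> k y) \<and>
     (\<forall>k\<in>K. \<forall>c. \<forall>x\<in>W. \<rho> k (c *\<^sub>R x) = c *\<^sub>R \<rho> k x) \<and>
     (\<forall>x\<in>W. \<rho> (mat 1) x = x) \<and>
     (\<forall>k1\<in>K. \<forall>k2\<in>K. \<forall>x\<in>W. \<rho> (k1 ** k2) x = \<rho> k1 (\<rho> k2 x)) \<and>
     (\<forall>x\<in>W. continuous_on K (\<lambda>k. \<rho> k x))"

definition orth_rep :: "(real^'n^'n) set \<Rightarrow> (real^'n^'n \<Rightarrow> ('v::euclidean_space \<Rightarrow>\<^sub>L 'v)) \<Rightarrow> bool" where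
  "orth_rep H \<rho> \<longleftrightarrow> is_rep H UNIV (\<lambda>h. blinfun_apply (\<rho> h)) \<and> continuous_on H \<rho> \<and>
     (\<forall>h\<in>H. \<forall>x. norm (blinfun_apply (\<rho> h) x) = norm x)"

definition symH :: "(real^'n^'n) set \<Rightarrow> (real^'n^'n \<Rightarrow> ('v::euclidean_space \<Rightarrow>\<^sub>L 'v)) \<Rightarrow> ('v \<Rightarrow>\<^sub>L 'v) set" where
  "symH H \<rho> = {s. (\<forall>x y. inner (blinfun_apply s x) y = inner x (blinfun_apply s y)) \<and>
     (\<forall>h\<in>H. \<forall>x. blinfun_apply s (blinfun_apply (\<rho> h) x) = blinfun_apply (\<rho> h) (blinfun_apply s x))}"

definition kernel :: "('v::real_normed_vector \<Rightarrow>\<^sub>L 'v) \<Rightarrow> 'v set" where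
  "kernel s = {x. blinfun_apply s x = 0}"

(* sym_H(U) for an H-invariant subspace U of V, maps given by their values on U *)
definition symH_sub :: "(real^'n^'n) set \<Rightarrow> (real^'n^'n \<Rightarrow> ('v::euclidean_space \<Rightarrow>\<^sub>L 'v)) \<Rightarrow> 'v set \<Rightarrow> ('v \<Rightarrow> 'v) set" where
  "symH_sub H \<rho> U = {f. (\<forall>x\<in>U. f x \<in> U) \<and>
     (\<forall>x\<in>U. \<forall>y\<in>U. f (x + y) = f x + f y) \<and> (\<forall>c. \<forall>x\<in>U. f (c *\<^sub>R x) = c *\<^sub>R f x) \<and>
     (\<forall>x\<in>U. \<forall>y\<in>U. inner (f x) y = inner x (f y)) \<and>
     (\<forall>h\<in>H. \<forall>x\<in>U. f (blinfun_apply (\<rho> h) x) = blinfun_apply (\<rho> h) (f x))}"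

definition orth_proj :: "'v::euclidean_space set \<Rightarrow> 'v \<Rightarrow> 'v" where
  "orth_proj U x = (THE p. p \<in> U \<and> (\<forall>u\<in>U. inner (x - p) u = 0))"

(* (H, U, rho|U) is isomorphic to (H, W, rhoW) in R_G *)
definition rep_iso_G :: "(real^'n^'n) set \<Rightarrow> (real^'n^'n) set \<Rightarrow>
    (real^'n^'n \<Rightarrow> 'v \<Rightarrow> 'v) \<Rightarrow> 'v::euclidean_space set \<Rightarrow>
    (real^'n^'n \<Rightarrow> 'w \<Rightarrow> 'w) \<Rightarrow> 'w::euclidean_space set \<Rightarrow> bool" where
  "rep_iso_G G H \<rho> U \<rho>W W \<longleftrightarrow>
     (\<exists>g\<in>G. H = (\<lambda>k. g ** k ** matrix_inv g) ` H \<and>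
       (\<exists>\<phi>. linear \<phi> \<and> bij_betw \<phi> U W \<and>
          (\<forall>k\<in>H. \<forall>x\<in>U. \<rho>W (g ** k ** matrix_inv g) (\<phi> x) = \<phi> (\<rho> k x))))"

(* sym_{H,sigma}(V), sigma represented by (H, W, rhoW) *)
definition symH_sigma :: "(real^'n^'n) set \<Rightarrow> (real^'n^'n) set \<Rightarrow>
    (real^'n^'n \<Rightarrow> ('v::euclidean_space \<Rightarrow>\<^sub>L 'v)) \<Rightarrow>
    (real^'n^'n \<Rightarrow> 'w \<Rightarrow> 'w) \<Rightarrow> 'w::euclidean_space set \<Rightarrow> ('v \<Rightarrow>\<^sub>L 'v) set" where
  "symH_sigma G H \<rho> \<rho>W W =
     {s \<in> symH H \<rho>. rep_iso_G G H (\<lambda>h. blinfun_apply (\<rho> h)) (kernel s) \<rho>W W}"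

definition inv_inner :: "(real^'n^'n) set \<Rightarrow> (real^'n^'n \<Rightarrow> 'w \<Rightarrow> 'w) \<Rightarrow> 'w::euclidean_space set \<Rightarrow>
    ('w \<Rightarrow> 'w \<Rightarrow> real) \<Rightarrow> bool" where
  "inv_inner K \<rho> W b \<longleftrightarrow>
     (\<forall>x\<in>W. \<forall>y\<in>W. b x y = b y x) \<and>
     (\<forall>x\<in>W. \<forall>y\<in>W. \<forall>z\<in>W. b (x + y) z = b x z + b y z) \<and>
     (\<forall>c. \<forall>x\<in>W. \<forall>y\<in>W. b (c *\<^sub>R x) y = c * b x y) \<and>
     (\<forall>x\<in>W. x \<noteq> 0 \<longrightarrow> b x x > 0) \<and>
     (\<forall>k\<in>K. \<forall>x\<in>W. \<forall>y\<in>W. b (\<rho> k x) (\<rho> k y) = b x y)"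

(* sym_K(W) w.r.t. the invariant inner product b; a map W -> W is encoded as
   the linear map on the ambient space that vanishes on the orthogonal complement of W *)
definition sym_rep :: "(real^'n^'n) set \<Rightarrow> (real^'n^'n \<Rightarrow> 'w \<Rightarrow> 'w) \<Rightarrow> 'w::euclidean_space set \<Rightarrow>
    ('w \<Rightarrow> 'w \<Rightarrow> real) \<Rightarrow> ('w \<Rightarrow>\<^sub>L 'w) set" where
  "sym_rep K \<rho> W b = {f. (\<forall>x\<in>W. blinfun_apply f x \<in> W) \<and>
      (\<forall>x. (\<forall>w\<in>W. inner x w = 0) \<longrightarrow> blinfun_apply f x = 0) \<and>
      (\<forall>x\<in>W. \<forall>y\<in>W. b (blinfun_apply f x) y = b x (blinfun_apply f y)) \<and>
      (\<forall>k\<in>K. \<forall>x\<in>W. blinfun_apply f (\<rho> k x) = \<rho> k (blinfun_apply f x))}"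

definition d_sigma :: "(real^'n^'n) set \<Rightarrow> (real^'n^'n \<Rightarrow> 'w \<Rightarrow> 'w) \<Rightarrow> 'w::euclidean_space set \<Rightarrow> nat" where
  "d_sigma K \<rho> W = dim (sym_rep K \<rho> W (SOME b. inv_inner K \<rho> W b))"

(* C^infinity: all iterated directional derivatives exist (Frechet) on the open set U *)
definition C_infinity_on :: "'a::real_normed_vector set \<Rightarrow> ('a \<Rightarrow> 'b::real_normed_vector) \<Rightarrow> bool" where
  "C_infinity_on U f \<longleftrightarrow> (\<exists>S. f \<in> S \<and>
     (\<forall>g\<in>S. g differentiable_on U \<and> (\<forall>v. (\<lambda>x. frechet_derivative g (at x) v) \<in> S)))"

(* M is a smooth embedded submanifold of codimension k of the finite-dim. linear subspace E:
   locally the zero set in E of a smooth submersion E \<supseteq> E\<inter>U \<rightarrow> Y with dim Y = k *)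
definition submanifold_codim :: "'a::real_normed_vector set \<Rightarrow> 'a set \<Rightarrow> nat \<Rightarrow> bool" where
  "submanifold_codim E M k \<longleftrightarrow> subspace E \<and> M \<subseteq> E \<and>
     (\<forall>p\<in>M. \<exists>U (F::'a \<Rightarrow> 'a) Y. open U \<and> p \<in> U \<and> subspace Y \<and> dim Y = k \<and> C_infinity_on U F \<and>
        (\<forall>q\<in>E \<inter> U. F q \<in> Y \<and> frechet_derivative F (at q) ` E = Y) \<and>
        M \<inter> U = {q \<in> E \<inter> U. F q = 0})"

definition tangent_space :: "'a::real_normed_vector set \<Rightarrow> 'a \<Rightarrow> 'a set" where
  "tangent_space M p = {v. \<exists>\<gamma> e. e > 0 \<and> \<gamma> 0 = p \<and> (\<forall>t\<in>{-e<..<e}. \<gamma> t \<in> M) \<and>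
       (\<gamma> has_vector_derivative v) (at 0)}"

(* the affine subspace p + L is transverse to M (inside E) at the point p \<in> M *)
definition transverse_at :: "'a::real_normed_vector set \<Rightarrow> 'a set \<Rightarrow> 'a set \<Rightarrow> 'a \<Rightarrow> bool" where
  "transverse_at E L M p \<longleftrightarrow> p \<in> M \<and> {a + b | a b. a \<in> tangent_space M p \<and> b \<in> L} = E"

end

theory Submission
  imports Defs
begin



lemma orth_proj_ex:
  fixes U :: "'v::euclidean_space set"
  assumes "subspace U"
  shows "\<exists>!p. p \<in> U \<and> (\<forall>u\<in>U. inner (x - p) u = 0)"
proof -
  obtain y z where y: "y \<in> span U" and z: "\<And>w. w \<in> span U \<Longrightarrow> orthogonal z w" and xe: "x = y + z"
    using orthogonal_subspace_decomp_exists[of U x] by blast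
  have sU: "span U = U" using assms by (simp add: span_eq_iff)
  have ex: "y \<in> U \<and> (\<forall>u\<in>U. inner (x - y) u = 0)"
  proof
    show "y \<in> U" using y sU by simp
    show "\<forall>u\<in>U. inner (x - y) u = 0" using z sU xe by (simp add: orthogonal_def)
  qed
  show ?thesis
  proof (rule ex1I[of _ y])
    fix p assume p: "p \<in> U \<and> (\<forall>u\<in>U. inner (x - p) u = 0)"
    have "y - p \<in> U" using p ex assms by (simp add: subspace_diff)
    then have "inner (x - p) (y - p) - inner (x - y) (y - p) = 0" using p ex by simp
    then have "inner (y - p) (y - p) = 0" by (simp add: inner_diff_left inner_diff_right)
    then show "p = y" by simp
  qed (use ex in blast)
qed

lemma orth_proj_both:
  fixes U :: "'v::euclidean_space set"
  assumes "subspace U"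
  shows "orth_proj U x \<in> U \<and> (\<forall>u\<in>U. inner (x - orth_proj U x) u = 0)"
  unfolding orth_proj_def by (rule theI'[OF orth_proj_ex[OF assms]])

lemma orth_proj:
  fixes U :: "'v::euclidean_space set"
  assumes "subspace U"
  shows "orth_proj U x \<in> U" "\<And>u. u\<in>U \<Longrightarrow> inner (x - orth_proj U x) u = 0"
  using orth_proj_both[OF assms, of x] by blast+

lemma orth_proj_unique:
  fixes U :: "'v::euclidean_space set"
  assumes "subspace U" "p \<in> U" "\<And>u. u\<in>U \<Longrightarrow> inner (x - p) u = 0"
  shows "orth_proj U x = p"
proof -
  have "p \<in> U \<and> (\<forall>u\<in>U. inner (x - p) u = 0)" using assms by blast
  then show ?thesis using orth_proj_ex[OF assms(1), of x] orth_proj_both[OF assms(1), of x]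
    by (metis (no_types, lifting))
qed

lemma orth_proj_id: "subspace U \<Longrightarrow> u \<in> U \<Longrightarrow> orth_proj U u = (u::'v::euclidean_space)"
  by (rule orth_proj_unique) auto

lemma orth_proj_orth: "subspace U \<Longrightarrow> (\<And>u. u\<in>U \<Longrightarrow> inner x u = 0) \<Longrightarrow> orth_proj U x = (0::'v::euclidean_space)"
  by (rule orth_proj_unique) (auto simp: subspace_0)

lemma orth_proj_linear:
  fixes U :: "'v::euclidean_space set"
  assumes U: "subspace U"
  shows "linear (orth_proj U)"
proof (rule linearI)
  fix x y
  show "orth_proj U (x + y) = orth_proj U x + orth_proj U y"
  proof (rule orth_proj_unique[OF U])
    show "orth_proj U x + orth_proj U y \<in> U" using orth_proj(1)[OF U] U by (simp add: subspace_add)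
    fix u assume u: "u \<in> U"
    have "inner (x + y - (orth_proj U x + orth_proj U y)) u = inner (x - orth_proj U x) u + inner (y - orth_proj U y) u"
      by (simp add: inner_diff_left inner_add_left)
    then show "inner (x + y - (orth_proj U x + orth_proj U y)) u = 0" using orth_proj(2)[OF U u] by simp
  qed
next
  fix c :: real and x show "orth_proj U (c *\<^sub>R x) = c *\<^sub>R orth_proj U x"
  proof (rule orth_proj_unique[OF U])
    show "c *\<^sub>R orth_proj U x \<in> U" using orth_proj[OF U] U by (simp add: subspace_scale)
    fix u assume "u \<in> U"
    have "inner (c *\<^sub>R x - c *\<^sub>R orth_proj U x) u = c * inner (x - orth_proj U x) u"
      by (simp add: algebra_simps inner_diff_left)
    then show "inner (c *\<^sub>R x - c *\<^sub>R orth_proj U x) u = 0" using orth_proj(2)[OF U \<open>u\<in>U\<close>, of x] by simp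
  qed
qed

lemma orth_proj_inner:
  fixes U :: "'v::euclidean_space set"
  assumes U: "subspace U" and "u \<in> U"
  shows "inner (orth_proj U x) u = inner x u"
  using orth_proj(2)[OF U assms(2), of x] by (simp add: inner_diff_left)

lemma orth_proj_sym:
  fixes U :: "'v::euclidean_space set"
  assumes U: "subspace U"
  shows "inner (orth_proj U x) y = inner x (orth_proj U y)"
proof -
  have "inner (orth_proj U x) y = inner (orth_proj U x) (orth_proj U y)"
    using orth_proj_inner[OF U orth_proj(1)[OF U, of x], of y] by (simp add: inner_commute)
  also have "\<dots> = inner x (orth_proj U y)"
    using orth_proj_inner[OF U orth_proj(1)[OF U, of y], of x] by simp
  finally show ?thesis .
qed

lemma orth_proj_idem: "subspace U \<Longrightarrow> orth_proj U (orth_proj U x) = orth_proj U (x::'v::euclidean_space)"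
  by (simp add: orth_proj orth_proj_id)

lemma dim_inj_real:
  fixes f :: "'a::real_vector \<Rightarrow> 'b::real_vector"
  assumes lf: "linear f" and fi: "inj_on f (span S)"
  shows "dim (f ` S) = dim S"
proof -
  obtain B where B: "B \<subseteq> S" "independent B" "S \<subseteq> span B" "card B = dim S"
    using real_vector.basis_exists[of S] by auto
  then have "span S = span B"
    using span_mono[of B S] span_mono[of S "span B"] span_span[of B] by auto
  moreover have "card (f ` B) = card B"
    using assms card_image[of f B] inj_on_subset[of f "span S" B] B span_superset by auto
  moreover have "(f ` B) \<subseteq> (f ` S)"
    using B by auto
  ultimately show ?thesis
    by (metis B(2) B(4) fi lf linear_dependent_inj_imageD span_linear_image real_vector.dim_eq_card_independent dim_span)
qed

lemma riesz_eucl: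
  fixes l :: "'v::euclidean_space \<Rightarrow> real"
  assumes "linear l"
  shows "\<exists>w. \<forall>u. l u = inner w u"
proof -
  interpret linear l by fact
  let ?w = "\<Sum>b\<in>Basis. l b *\<^sub>R b"
  have "l u = inner ?w u" for u
  proof -
    have "l u = l (\<Sum>b\<in>Basis. (u \<bullet> b) *\<^sub>R b)" by (simp add: euclidean_representation)
    also have "\<dots> = (\<Sum>b\<in>Basis. (u \<bullet> b) * l b)" by (simp add: sum scale)
    also have "\<dots> = inner ?w u" by (simp add: inner_sum_right inner_commute mult.commute)
    finally show ?thesis .
  qed
  then show ?thesis by blast
qed




definition sa :: "('v::euclidean_space \<Rightarrow>\<^sub>L 'v) \<Rightarrow> bool" where
  "sa t \<longleftrightarrow> (\<forall>x y. inner (t x) y = inner x (t y))"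

locale lsetup =
  fixes H :: "(real^'n^'n) set" and \<rho> :: "real^'n^'n \<Rightarrow> ('v::euclidean_space \<Rightarrow>\<^sub>L 'v)"
    and s :: "'v \<Rightarrow>\<^sub>L 'v"
  assumes mg: "matrix_group H" and orth: "orth_rep H \<rho>" and sE: "s \<in> symH H \<rho>"
begin

definition eqv :: "('v \<Rightarrow>\<^sub>L 'v) \<Rightarrow> bool" where
  "eqv t \<longleftrightarrow> (\<forall>h\<in>H. \<forall>x. t (\<rho> h x) = \<rho> h (t x))"

abbreviation "E \<equiv> symH H \<rho>"

lemma E_iff: "t \<in> E \<longleftrightarrow> sa t \<and> eqv t"
  by (simp add: symH_def sa_def eqv_def)

lemma rho_one: "\<rho> (mat 1) x = x"
  using orth by (simp add: orth_rep_def is_rep_def)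

lemma rho_mult: "k1 \<in> H \<Longrightarrow> k2 \<in> H \<Longrightarrow> \<rho> (k1 ** k2) x = \<rho> k1 (\<rho> k2 x)"
  using orth by (simp add: orth_rep_def is_rep_def)

lemma rho_norm: "h \<in> H \<Longrightarrow> norm (\<rho> h x) = norm x"
  using orth by (simp add: orth_rep_def)

lemma rho_inner: "h \<in> H \<Longrightarrow> inner (\<rho> h x) (\<rho> h y) = inner x y"
proof -
  assume h: "h \<in> H"
  have "inner (\<rho> h x) (\<rho> h y) = ((norm (\<rho> h x + \<rho> h y))\<^sup>2 - (norm (\<rho> h x))\<^sup>2 - (norm (\<rho> h y))\<^sup>2) / 2"
    by (rule dot_norm)
  also have "\<rho> h x + \<rho> h y = \<rho> h (x + y)" by (simp add: blinfun.add_right)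
  finally show ?thesis using h by (simp add: rho_norm dot_norm)
qed

lemma rho_inv: "h \<in> H \<Longrightarrow> \<exists>h'\<in>H. (\<forall>x. \<rho> h (\<rho> h' x) = x) \<and> (\<forall>x. \<rho> h' (\<rho> h x) = x)"
proof -
  assume h: "h \<in> H"
  then have inv: "invertible h" and hi: "matrix_inv h \<in> H" using mg by (auto simp: matrix_group_def)
  have "h ** matrix_inv h = mat 1 \<and> matrix_inv h ** h = mat 1"
    using inv unfolding invertible_def matrix_inv_def by (rule someI_ex)
  then show ?thesis using h hi rho_mult[of h "matrix_inv h"] rho_mult[of "matrix_inv h" h]
    by (metis rho_one)
qed

lemma s_sym: "inner (s x) y = inner x (s y)"
  using sE by (simp add: symH_def)

lemma s_eqv: "h \<in> H \<Longrightarrow> s (\<rho> h x) = \<rho> h (s x)"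
  using sE by (simp add: symH_def)

abbreviation "K \<equiv> kernel s"

lemma K_sub: "subspace K"
  unfolding kernel_def subspace_def by (auto simp: blinfun.add_right blinfun.scaleR_right)

lemma K_iff: "x \<in> K \<longleftrightarrow> s x = 0" by (simp add: kernel_def)

lemma K_inv: "h \<in> H \<Longrightarrow> x \<in> K \<Longrightarrow> \<rho> h x \<in> K"
  by (simp add: K_iff s_eqv)

definition P :: "'v \<Rightarrow>\<^sub>L 'v" where "P = Blinfun (orth_proj K)"

lemma P_ap: "blinfun_apply P = orth_proj K"
  unfolding P_def using orth_proj_linear[OF K_sub]
  by (simp add: bounded_linear_Blinfun_apply linear_conv_bounded_linear)

lemma P_K: "P x \<in> K" by (simp add: P_ap orth_proj K_sub)
lemma P_id: "x \<in> K \<Longrightarrow> P x = x" by (simp add: P_ap orth_proj_id K_sub)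
lemma P_P: "P (P x) = P x" by (simp add: P_id P_K)
lemma P_sym: "inner (P x) y = inner x (P y)" by (simp add: P_ap orth_proj_sym K_sub)
lemma P_inner: "u \<in> K \<Longrightarrow> inner (P x) u = inner x u" by (simp add: P_ap orth_proj_inner K_sub)
lemma P_orth: "(\<And>u. u \<in> K \<Longrightarrow> inner x u = 0) \<Longrightarrow> P x = 0" by (simp add: P_ap orth_proj_orth K_sub)
lemma P_perp: "u \<in> K \<Longrightarrow> inner (x - P x) u = 0" by (simp add: P_inner inner_diff_left)

lemma P_eqv: "h \<in> H \<Longrightarrow> P (\<rho> h x) = \<rho> h (P x)"
proof -
  assume h: "h \<in> H"
  obtain h' where h': "h' \<in> H" "\<And>x. \<rho> h (\<rho> h' x) = x" "\<And>x. \<rho> h' (\<rho> h x) = x" using rho_inv[OF h] by blast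
  show ?thesis unfolding P_ap
  proof (rule orth_proj_unique[OF K_sub])
    show "\<rho> h (orth_proj K x) \<in> K" using K_inv[OF h] P_K by (simp add: P_ap)
    fix u assume u: "u \<in> K"
    have "inner (\<rho> h x - \<rho> h (orth_proj K x)) u = inner (\<rho> h (x - P x)) (\<rho> h (\<rho> h' u))"
      by (simp add: h' P_ap blinfun.diff_right)
    also have "\<dots> = inner (x - P x) (\<rho> h' u)" using h by (rule rho_inner)
    also have "\<dots> = 0" using P_perp K_inv[OF h'(1) u] by simp
    finally show "inner (\<rho> h x - \<rho> h (orth_proj K x)) u = 0" .
  qed
qed

lemma P_s: "P (s x) = 0"
  by (rule P_orth) (simp add: s_sym K_iff)

lemma s_P: "s (P x) = 0" using P_K K_iff by simp

definition Q :: "'v \<Rightarrow>\<^sub>L 'v" where "Q = id_blinfun - P"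

lemma Q_ap: "Q x = x - P x" by (simp add: Q_def blinfun.diff_left)
lemma P_Q: "P (Q x) = 0" by (simp add: Q_ap blinfun.diff_right P_P)
lemma Q_P: "Q (P x) = 0" by (simp add: Q_ap P_P)
lemma Q_Q: "Q (Q x) = Q x" by (simp add: Q_ap blinfun.diff_right P_P)
lemma PQ: "P x + Q x = x" by (simp add: Q_ap)
lemma Q_sym: "inner (Q x) y = inner x (Q y)" by (simp add: Q_ap inner_diff_left inner_diff_right P_sym)
lemma Q_eqv: "h \<in> H \<Longrightarrow> Q (\<rho> h x) = \<rho> h (Q x)" by (simp add: Q_ap P_eqv blinfun.diff_right)

lemma P_sa: "sa P" by (simp add: sa_def P_sym)
lemma Q_sa: "sa Q" by (simp add: sa_def Q_sym)
lemma P_eqv': "eqv P" by (simp add: eqv_def P_eqv)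
lemma Q_eqv': "eqv Q" by (simp add: eqv_def Q_eqv)


definition A :: "('v \<Rightarrow>\<^sub>L 'v) \<Rightarrow> ('v \<Rightarrow>\<^sub>L 'v)" where
  "A t = (Q o\<^sub>L t o\<^sub>L Q) + P"

lemma A_ap: "A t x = Q (t (Q x)) + P x" by (simp add: A_def blinfun.add_left)

definition U :: "('v \<Rightarrow>\<^sub>L 'v) set" where "U = {t. inj (blinfun_apply (A t))}"

definition R :: "('v \<Rightarrow>\<^sub>L 'v) \<Rightarrow> ('v \<Rightarrow>\<^sub>L 'v)" where
  "R t = Blinfun (inv (blinfun_apply (A t)))"

lemma U_bij: assumes "t \<in> U" shows "bij (blinfun_apply (A t))"
proof -
  have inj: "inj (blinfun_apply (A t))" using assms by (simp add: U_def)
  have "linear (blinfun_apply (A t))" by (simp add: bounded_linear.linear[OF blinfun.bounded_linear_right])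
  then have "surj (blinfun_apply (A t))" using inj by (simp add: linear_injective_imp_surjective)
  then show ?thesis using inj by (simp add: bij_def)
qed

lemma R_ap: assumes "t \<in> U" shows "blinfun_apply (R t) = inv (blinfun_apply (A t))"
proof -
  have "bounded_linear (inv (blinfun_apply (A t)))"
    using assms by (intro inj_linear_imp_inv_bounded_linear) (auto simp: U_def blinfun.bounded_linear_right)
  then show ?thesis by (simp add: R_def bounded_linear_Blinfun_apply)
qed

lemma A_R: "t \<in> U \<Longrightarrow> A t (R t x) = x"
  using U_bij by (simp add: R_ap bij_def surj_f_inv_f)

lemma R_A: "t \<in> U \<Longrightarrow> R t (A t x) = x"
  using U_bij by (simp add: R_ap bij_def inv_f_f)

lemma A_P: "A t (P x) = P x" by (simp add: A_ap Q_P P_P)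
lemma P_A: "P (A t x) = P x" by (simp add: A_ap P_Q blinfun.add_right P_P)

lemma R_P: "t \<in> U \<Longrightarrow> R t (P x) = P x"
  using R_A[of t "P x"] by (simp only: A_P)
lemma P_R: "t \<in> U \<Longrightarrow> P (R t x) = P x"
  using P_A[of t "R t x"] by (simp only: A_R)
lemma Q_R: "t \<in> U \<Longrightarrow> Q (R t x) = R t (Q x)"
  by (simp add: Q_ap P_R R_P blinfun.diff_right)

lemma A_sa: "sa t \<Longrightarrow> sa (A t)"
  by (simp add: sa_def A_ap inner_add_left inner_add_right Q_sym P_sym)
lemma A_eqv: "eqv t \<Longrightarrow> eqv (A t)"
  by (simp add: eqv_def A_ap Q_eqv P_eqv blinfun.add_right)

lemma R_sa: assumes "t \<in> U" "sa t" shows "sa (R t)"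
  unfolding sa_def
proof (intro allI)
  fix x y
  have "inner (R t x) y = inner (R t x) (A t (R t y))" by (simp add: A_R assms)
  also have "\<dots> = inner (A t (R t x)) (R t y)" using A_sa[OF assms(2)] by (simp add: sa_def)
  also have "\<dots> = inner x (R t y)" by (simp add: A_R assms)
  finally show "inner (R t x) y = inner x (R t y)" .
qed

lemma R_eqv: assumes "t \<in> U" "eqv t" shows "eqv (R t)"
  unfolding eqv_def
proof (intro ballI allI)
  fix h x assume h: "h \<in> H"
  have "R t (\<rho> h x) = R t (\<rho> h (A t (R t x)))" by (simp add: A_R assms)
  also have "\<dots> = R t (A t (\<rho> h (R t x)))" using A_eqv[OF assms(2)] h by (simp add: eqv_def)
  also have "\<dots> = \<rho> h (R t x)" by (simp add: R_A assms)
  finally show "R t (\<rho> h x) = \<rho> h (R t x)" .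
qed

definition F :: "('v \<Rightarrow>\<^sub>L 'v) \<Rightarrow> ('v \<Rightarrow>\<^sub>L 'v)" where
  "F t = (P o\<^sub>L t o\<^sub>L P) - (P o\<^sub>L t o\<^sub>L Q o\<^sub>L R t o\<^sub>L Q o\<^sub>L t o\<^sub>L P)"

lemma F_ap: "F t x = P (t (P x)) - P (t (Q (R t (Q (t (P x))))))"
  by (simp add: F_def blinfun.diff_left)

lemma F_P: "F t (P x) = F t x" by (simp add: F_ap P_P)

lemma ker_to_Z:
  assumes tU: "t \<in> U" and x: "t x = 0"
  shows "F t (P x) = 0" and "x = P x - R t (Q (t (P x)))"
proof -
  have "t (P x) + t (Q x) = t (P x + Q x)" by (simp only: blinfun.add_right)
  also have "\<dots> = 0" by (simp only: PQ x)
  finally have tx: "t (P x) + t (Q x) = 0" .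
  then have tx': "t (Q x) = - t (P x)" by (simp add: eq_neg_iff_add_eq_0 add.commute)
  have "A t (Q x) = Q (t (Q x))" by (simp add: A_ap P_Q Q_Q)
  also have "\<dots> = - Q (t (P x))" by (simp add: tx' blinfun.minus_right)
  finally have "R t (A t (Q x)) = R t (- Q (t (P x)))" by simp
  then have Qx: "Q x = - R t (Q (t (P x)))" by (simp add: R_A tU blinfun.minus_right)
  have "x = P x + Q x" by (simp add: PQ)
  also have "\<dots> = P x - R t (Q (t (P x)))" by (simp add: Qx)
  finally show "x = P x - R t (Q (t (P x)))" .
  have "Q (R t (Q (t (P x)))) = - Q x" using Qx by (simp add: blinfun.minus_right Q_Q Q_R[OF tU])
  then have "F t (P x) = P (t (P x)) + P (t (Q x))"
    by (simp add: F_ap P_P blinfun.minus_right)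
  also have "\<dots> = P (t (P x) + t (Q x))" by (simp only: blinfun.add_right)
  also have "\<dots> = 0" by (simp only: tx blinfun.zero_right)
  finally show "F t (P x) = 0" .
qed

lemma Z_to_ker:
  assumes tU: "t \<in> U" and k: "k \<in> K" and Fk: "F t k = 0"
  shows "t (k - R t (Q (t k))) = 0" and "P (k - R t (Q (t k))) = k"
proof -
  have Pk: "P k = k" using k by (rule P_id)
  show "P (k - R t (Q (t k))) = k" by (simp add: blinfun.diff_right P_R tU P_Q Pk)
  define y where "y = R t (Q (t k))"
  have Qy: "Q y = y" by (simp add: y_def Q_R tU Q_Q)
  have Py: "P y = 0" by (simp add: y_def P_R tU P_Q)
  have "A t y = Q (t (Q y)) + P y" by (rule A_ap)
  also have "\<dots> = Q (t y)" by (simp only: Qy Py add_0_right)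
  finally have e1: "A t y = Q (t y)" .
  have e2: "A t y = Q (t k)" by (simp add: y_def A_R tU)
  have "Q (t (k - y)) = Q (t k) - Q (t y)" by (simp only: blinfun.diff_right)
  also have "\<dots> = 0" using e1 e2 by simp
  finally have 1: "Q (t (k - y)) = 0" .
  have "F t k = P (t k) - P (t (Q y))" by (simp add: F_ap Pk y_def)
  then have "F t k = P (t k) - P (t y)" by (simp only: Qy)
  then have "P (t (k - y)) = F t k" by (simp only: blinfun.diff_right)
  then have 2: "P (t (k - y)) = 0" using Fk by simp
  have "t (k - y) = P (t (k - y)) + Q (t (k - y))" by (simp only: PQ)
  then show "t (k - R t (Q (t k))) = 0" using 1 2 by (simp add: y_def)
qed

definition Z :: "('v \<Rightarrow>\<^sub>L 'v) \<Rightarrow> 'v set" where "Z t = {k \<in> K. F t k = 0}"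

lemma Z_sub: "subspace (Z t)"
  using K_sub unfolding Z_def subspace_def by (auto simp: blinfun.add_right blinfun.scaleR_right)

lemma kernel_sub: "subspace (kernel t)"
  unfolding kernel_def subspace_def by (auto simp: blinfun.add_right blinfun.scaleR_right)

lemma P_bij_ker: assumes tU: "t \<in> U" shows "bij_betw (blinfun_apply P) (kernel t) (Z t)"
  unfolding bij_betw_def
proof
  show "inj_on (blinfun_apply P) (kernel t)"
  proof (rule inj_onI)
    fix x y assume "x \<in> kernel t" "y \<in> kernel t" "P x = P y"
    then show "x = y" using ker_to_Z(2)[OF tU, of x] ker_to_Z(2)[OF tU, of y] by (simp add: kernel_def)
  qed
  show "blinfun_apply P ` kernel t = Z t"
  proof
    show "blinfun_apply P ` kernel t \<subseteq> Z t"
      using ker_to_Z(1)[OF tU] P_K by (auto simp: Z_def kernel_def)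
    show "Z t \<subseteq> blinfun_apply P ` kernel t"
    proof
      fix k assume "k \<in> Z t"
      then have k: "k \<in> K" "F t k = 0" by (auto simp: Z_def)
      show "k \<in> blinfun_apply P ` kernel t"
      proof
        show "k = P (k - R t (Q (t k)))" using Z_to_ker(2)[OF tU k] by simp
        show "k - R t (Q (t k)) \<in> kernel t" using Z_to_ker(1)[OF tU k] by (simp add: kernel_def)
      qed
    qed
  qed
qed

lemma dim_ker_Z: assumes "t \<in> U" shows "dim (kernel t) = dim (Z t)"
proof -
  have "dim (blinfun_apply P ` kernel t) = dim (kernel t)"
  proof (rule dim_inj_real)
    show "linear (blinfun_apply P)" by (rule bounded_linear.linear[OF blinfun.bounded_linear_right])
    have sk: "span (kernel t) = kernel t" by (rule span_eq_iff[THEN iffD2, OF kernel_sub])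
    show "inj_on (blinfun_apply P) (span (kernel t))" unfolding sk using P_bij_ker[OF assms] by (simp add: bij_betw_def)
  qed
  then show ?thesis using P_bij_ker[OF assms] by (simp add: bij_betw_def)
qed

lemma Z_eq_K: assumes "t \<in> U" "dim (kernel t) = dim K" shows "F t = 0"
proof -
  have "Z t \<subseteq> K" by (auto simp: Z_def)
  moreover have "dim K \<le> dim (Z t)" using dim_ker_Z assms by simp
  ultimately have "Z t = K" using subspace_dim_equal[OF Z_sub K_sub] by blast
  then have "K \<subseteq> Z t" by simp
  then have "F t x = 0" for x using F_P[of t x] P_K[of x] by (auto simp: Z_def)
  then show ?thesis by (simp add: blinfun_eqI)
qed

lemma F0_Z: "F t = 0 \<Longrightarrow> Z t = K" by (auto simp: Z_def)

end



lemma blinfun_inj: "(\<And>x. blinfun_apply f x = 0 \<Longrightarrow> x = 0) \<Longrightarrow> inj (blinfun_apply f)"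
  by (rule injI) (metis blinfun.diff_right eq_iff_diff_eq_0)

lemma norm_comp3: "norm (a o\<^sub>L b o\<^sub>L c) \<le> norm a * norm b * norm (c::'a::real_normed_vector \<Rightarrow>\<^sub>L 'a)"
proof -
  have "norm (a o\<^sub>L b o\<^sub>L c) \<le> norm (a o\<^sub>L b) * norm c" by (rule norm_blinfun_compose)
  also have "\<dots> \<le> norm a * norm b * norm c" by (intro mult_right_mono norm_blinfun_compose norm_ge_zero)
  finally show ?thesis .
qed

lemma norm_app4:
  fixes a b c d :: "'a::real_normed_vector \<Rightarrow>\<^sub>L 'a"
  shows "norm (a (b (c (d x)))) \<le> norm a * norm b * norm c * norm d * norm x"
proof -
  have "norm (a (b (c (d x)))) = norm ((a o\<^sub>L b o\<^sub>L c o\<^sub>L d) x)" by simp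
  also have "\<dots> \<le> norm (a o\<^sub>L b o\<^sub>L c o\<^sub>L d) * norm x" by (rule norm_blinfun)
  also have "\<dots> \<le> (norm a * norm b * norm c * norm d) * norm x"
  proof (intro mult_right_mono norm_ge_zero)
    have "norm (a o\<^sub>L b o\<^sub>L c o\<^sub>L d) \<le> norm (a o\<^sub>L b o\<^sub>L c) * norm d" by (rule norm_blinfun_compose)
    also have "\<dots> \<le> (norm a * norm b * norm c) * norm d" by (intro mult_right_mono norm_comp3 norm_ge_zero)
    finally show "norm (a o\<^sub>L b o\<^sub>L c o\<^sub>L d) \<le> norm a * norm b * norm c * norm d" .
  qed
  finally show ?thesis .
qed

context lsetup begin

lemma s_U: "s \<in> U"
proof -
  have As: "A s x = s x + P x" for x
  proof -
    have "s (Q x) = s x" by (simp add: Q_ap blinfun.diff_right s_P)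
    moreover have "Q (s x) = s x" by (simp add: Q_ap P_s)
    ultimately show ?thesis by (simp add: A_ap)
  qed
  have "x = 0" if "A s x = 0" for x
  proof -
    have sx: "s x = - P x" using that As by (simp add: eq_neg_iff_add_eq_0)
    have "inner (s x) (P x) = inner x (s (P x))" by (rule s_sym)
    then have "inner (P x) (P x) = 0" using sx by (simp add: s_P)
    then have Px: "P x = 0" by simp
    then have "x \<in> K" using sx by (simp add: K_iff)
    then show "x = 0" using Px P_id by simp
  qed
  then show ?thesis unfolding U_def by (auto intro: blinfun_inj)
qed

lemma R_diff:
  assumes t0: "t0 \<in> U" and t: "t \<in> U"
  shows "R t - R t0 = - (R t o\<^sub>L (Q o\<^sub>L (t - t0) o\<^sub>L Q) o\<^sub>L R t0)"
proof (rule blinfun_eqI)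
  fix x
  define y where "y = R t0 x"
  have "A t0 y = x" by (simp add: y_def A_R t0)
  have "A t0 y = A t y + Q ((t0 - t) (Q y))"
    by (simp add: A_ap blinfun.diff_left blinfun.diff_right)
  then have "R t x = R t (A t y) + R t (Q ((t0 - t) (Q y)))"
    using \<open>A t0 y = x\<close> by (simp add: blinfun.add_right)
  then have "R t x = y + R t (Q ((t0 - t) (Q y)))" by (simp add: R_A t)
  then show "(R t - R t0) x = (- (R t o\<^sub>L (Q o\<^sub>L (t - t0) o\<^sub>L Q) o\<^sub>L R t0)) x"
    by (simp add: y_def blinfun.diff_left blinfun.minus_left blinfun.diff_right blinfun.minus_right)
qed

lemma U_open: "open U"
  unfolding open_dist
proof (intro ballI)
  fix t0 assume t0: "t0 \<in> U"
  define c where "c = norm (R t0) * norm Q * norm Q + 1"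
  have c: "c > 0" unfolding c_def by (intro add_nonneg_pos mult_nonneg_nonneg norm_ge_zero) simp
  show "\<exists>e>0. \<forall>t. dist t t0 < e \<longrightarrow> t \<in> U"
  proof (intro exI[of _ "1/c"] conjI allI impI)
    show "1/c > 0" using c by simp
    fix t assume "dist t t0 < 1/c"
    then have d: "norm (t0 - t) * c < 1" using c by (simp add: dist_norm norm_minus_commute field_simps)
    have "x = 0" if "A t x = 0" for x
    proof -
      have "A t0 x = A t0 x - A t x" using that by simp
      also have "\<dots> = Q ((t0 - t) (Q x))" by (simp add: A_ap blinfun.diff_left blinfun.diff_right)
      finally have "R t0 (A t0 x) = R t0 (Q ((t0 - t) (Q x)))" by simp
      then have "x = R t0 (Q ((t0 - t) (Q x)))" by (simp add: R_A t0)
      then have "norm x \<le> norm (R t0) * norm Q * norm (t0 - t) * norm Q * norm x"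
        using norm_app4[of "R t0" Q "t0 - t" Q x] by simp
      also have "\<dots> = (norm (R t0) * norm Q * norm Q) * norm (t0 - t) * norm x" by (simp add: algebra_simps)
      also have "\<dots> \<le> c * norm (t0 - t) * norm x" by (simp add: c_def mult_right_mono)
      finally have "norm x \<le> (norm (t0 - t) * c) * norm x" by (simp add: algebra_simps)
      then have "(1 - norm (t0 - t) * c) * norm x \<le> 0" by (simp add: algebra_simps)
      then have "norm x \<le> 0" using d by (simp add: mult_le_0_iff)
      then show "x = 0" by simp
    qed
    then show "t \<in> U" unfolding U_def by (auto intro: blinfun_inj)
  qed
qed


lemma bl_sandwich:
  fixes a b c d :: "'v \<Rightarrow>\<^sub>L 'v"
  shows "bounded_linear (\<lambda>h::'v \<Rightarrow>\<^sub>L 'v. a o\<^sub>L (b o\<^sub>L h o\<^sub>L c) o\<^sub>L d)"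
proof -
  have b1: "bounded_linear (\<lambda>h::'v \<Rightarrow>\<^sub>L 'v. b o\<^sub>L h)" by (rule bounded_bilinear.bounded_linear_right[OF bounded_bilinear_blinfun_compose])
  have b2: "bounded_linear (\<lambda>h::'v \<Rightarrow>\<^sub>L 'v. h o\<^sub>L c)" by (rule bounded_bilinear.bounded_linear_left[OF bounded_bilinear_blinfun_compose])
  have b3: "bounded_linear (\<lambda>h::'v \<Rightarrow>\<^sub>L 'v. a o\<^sub>L h)" by (rule bounded_bilinear.bounded_linear_right[OF bounded_bilinear_blinfun_compose])
  have b4: "bounded_linear (\<lambda>h::'v \<Rightarrow>\<^sub>L 'v. h o\<^sub>L d)" by (rule bounded_bilinear.bounded_linear_left[OF bounded_bilinear_blinfun_compose])
  show ?thesis using bounded_linear_compose[OF b4 bounded_linear_compose[OF b3 bounded_linear_compose[OF b2 b1]]] .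
qed

lemma R_deriv:
  assumes t0: "t0 \<in> U"
  shows "(R has_derivative (\<lambda>h. - (R t0 o\<^sub>L (Q o\<^sub>L h o\<^sub>L Q) o\<^sub>L R t0))) (at t0)"
  unfolding has_derivative_at_alt
proof (intro conjI allI impI)
  show "bounded_linear (\<lambda>h. - (R t0 o\<^sub>L (Q o\<^sub>L h o\<^sub>L Q) o\<^sub>L R t0))"
    by (rule bounded_linear_minus[OF bl_sandwich])
  fix e :: real assume e: "e > 0"
  obtain d0 where d0: "d0 > 0" "\<And>t. dist t t0 < d0 \<Longrightarrow> t \<in> U"
    using U_open t0 unfolding open_dist by blast
  define r where "r = norm (R t0)"
  define c where "c = norm Q * norm Q * r + 1"
  have r0: "r \<ge> 0" by (simp add: r_def)
  have c1: "c \<ge> 1" unfolding c_def using r0 by simp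
  define d where "d = min d0 (min (1 / (2 * c)) (e / (2 * r * c * c + 1)))"
  have dpos: "d > 0" unfolding d_def using d0 c1 e r0 by (simp add: add_nonneg_pos)
  show "\<exists>d>0. \<forall>y. norm (y - t0) < d \<longrightarrow> norm (R y - R t0 - - (R t0 o\<^sub>L (Q o\<^sub>L (y - t0) o\<^sub>L Q) o\<^sub>L R t0)) \<le> e * norm (y - t0)"
  proof (intro exI[of _ d] conjI allI impI dpos)
    fix t assume tn: "norm (t - t0) < d"
    have tU: "t \<in> U" using d0(2)[of t] tn unfolding d_def by (simp add: dist_norm)
    define h where "h = t - t0"
    define n where "n = norm h"
    have n0: "n \<ge> 0" by (simp add: n_def)
    define a where "a = norm (R t - R t0)"
    define b where "b = norm (R t)"
    have cn: "c * n \<le> 1/2"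
    proof -
      have "n < 1 / (2 * c)" using tn unfolding d_def n_def h_def by simp
      then show ?thesis using c1 by (simp add: field_simps)
    qed
    have en: "(2 * r * c * c + 1) * n \<le> e"
    proof -
      have "n < e / (2 * r * c * c + 1)" using tn unfolding d_def n_def h_def by simp
      moreover have "2 * r * c * c + 1 > 0" using r0 c1 by (simp add: add_nonneg_pos)
      ultimately show ?thesis by (simp add: field_simps)
    qed
    have RD: "R t - R t0 = - (R t o\<^sub>L (Q o\<^sub>L h o\<^sub>L Q) o\<^sub>L R t0)" unfolding h_def by (rule R_diff[OF t0 tU])
    have nQhQ: "norm (Q o\<^sub>L h o\<^sub>L Q) \<le> norm Q * norm Q * n"
      using norm_comp3[of Q h Q] by (simp add: n_def algebra_simps)
    have a1: "a \<le> b * (c * n)"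
    proof -
      have "a = norm (R t o\<^sub>L (Q o\<^sub>L h o\<^sub>L Q) o\<^sub>L R t0)" by (simp add: a_def RD)
      also have "\<dots> \<le> b * norm (Q o\<^sub>L h o\<^sub>L Q) * r" using norm_comp3 by (simp add: b_def r_def)
      also have "\<dots> \<le> b * (norm Q * norm Q * n) * r"
        by (intro mult_right_mono mult_left_mono nQhQ) (simp_all add: b_def r0)
      also have "\<dots> = b * ((norm Q * norm Q * r) * n)" by (simp add: algebra_simps)
      also have "\<dots> \<le> b * (c * n)"
        by (intro mult_left_mono mult_right_mono) (simp_all add: c_def n0 b_def)
      finally show ?thesis .
    qed
    have b1: "b \<le> r + a"
      unfolding b_def r_def a_def using norm_triangle_ineq[of "R t0" "R t - R t0"] by simp
    have cn0: "c * n \<ge> 0" using c1 n0 by simp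
    have "b * (c * n) \<le> (r + a) * (c * n)" by (rule mult_right_mono[OF b1 cn0])
    then have a2: "a \<le> (r + a) * (c * n)" using a1 by linarith
    have "(r + a) * (c * n) \<le> (r + a) * (1/2)"
      by (rule mult_left_mono[OF cn]) (simp add: a_def r0)
    then have ar: "a \<le> r" using a2 by simp
    have "(r + a) * (c * n) \<le> (2 * r) * (c * n)" by (rule mult_right_mono[OF _ cn0]) (use ar in simp)
    then have a3: "a \<le> (2 * r) * (c * n)" using a2 by linarith
    have err: "R t - R t0 - - (R t0 o\<^sub>L (Q o\<^sub>L h o\<^sub>L Q) o\<^sub>L R t0) = (R t0 - R t) o\<^sub>L (Q o\<^sub>L h o\<^sub>L Q) o\<^sub>L R t0"
      by (rule blinfun_eqI) (simp add: RD blinfun.diff_left blinfun.minus_left)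
    have "norm ((R t0 - R t) o\<^sub>L (Q o\<^sub>L h o\<^sub>L Q) o\<^sub>L R t0) \<le> a * norm (Q o\<^sub>L h o\<^sub>L Q) * r"
      using norm_comp3[of "R t0 - R t" "Q o\<^sub>L h o\<^sub>L Q" "R t0"] by (simp add: a_def r_def norm_minus_commute)
    also have "\<dots> \<le> a * (norm Q * norm Q * n) * r"
      by (intro mult_right_mono mult_left_mono nQhQ) (simp_all add: a_def r0)
    also have "\<dots> = a * ((norm Q * norm Q * r) * n)" by (simp add: algebra_simps)
    also have "\<dots> \<le> a * (c * n)"
      by (intro mult_left_mono mult_right_mono) (simp_all add: c_def n0 a_def)
    also have "\<dots> \<le> ((2 * r) * (c * n)) * (c * n)"
      by (rule mult_right_mono[OF a3 cn0])
    also have "\<dots> = ((2 * r * c * c) * n) * n" by (simp add: algebra_simps)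
    also have "\<dots> \<le> e * n"
    proof (rule mult_right_mono[OF _ n0])
      have "(2 * r * c * c) * n \<le> (2 * r * c * c + 1) * n" using n0 by (simp add: algebra_simps)
      then show "(2 * r * c * c) * n \<le> e" using en by simp
    qed
    finally show "norm (R t - R t0 - - (R t0 o\<^sub>L (Q o\<^sub>L (t - t0) o\<^sub>L Q) o\<^sub>L R t0)) \<le> e * norm (t - t0)"
      using err by (simp add: h_def n_def)
  qed
qed

end



inductive cls :: "('v::euclidean_space \<Rightarrow>\<^sub>L 'v) set \<Rightarrow> (('v \<Rightarrow>\<^sub>L 'v) \<Rightarrow> ('v \<Rightarrow>\<^sub>L 'v)) \<Rightarrow> ('v \<Rightarrow>\<^sub>L 'v)
    \<Rightarrow> (('v \<Rightarrow>\<^sub>L 'v) \<Rightarrow> ('v \<Rightarrow>\<^sub>L 'v)) \<Rightarrow> bool"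
  for U R Q where
  cc: "cls U R Q (\<lambda>x. c)"
| ci: "cls U R Q (\<lambda>x. x)"
| cR: "cls U R Q R"
| cadd: "cls U R Q f \<Longrightarrow> cls U R Q g \<Longrightarrow> cls U R Q (\<lambda>x. f x + g x)"
| cdiff: "cls U R Q f \<Longrightarrow> cls U R Q g \<Longrightarrow> cls U R Q (\<lambda>x. f x - g x)"
| cmul: "cls U R Q f \<Longrightarrow> cls U R Q g \<Longrightarrow> cls U R Q (\<lambda>x. f x o\<^sub>L g x)"
| ceq: "cls U R Q f \<Longrightarrow> (\<And>x. x \<in> U \<Longrightarrow> g x = f x) \<Longrightarrow> cls U R Q g"

lemma cls_deriv:
  assumes U: "open U"
    and hR: "\<And>x. x \<in> U \<Longrightarrow> (R has_derivative (\<lambda>h. - (R x o\<^sub>L (Q o\<^sub>L h o\<^sub>L Q) o\<^sub>L R x))) (at x)"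
    and f: "cls U R Q f"
  shows "\<exists>D. (\<forall>x\<in>U. (f has_derivative D x) (at x)) \<and> (\<forall>v. cls U R Q (\<lambda>x. D x v))"
  using f
proof (induction rule: cls.induct)
  case (cc c)
  show ?case by (rule exI[of _ "\<lambda>x h. 0"]) (auto intro: cls.cc)
next
  case ci
  show ?case by (rule exI[of _ "\<lambda>x h. h"]) (auto intro: cls.cc)
next
  case cR
  show ?case
  proof (rule exI[of _ "\<lambda>x h. - (R x o\<^sub>L (Q o\<^sub>L h o\<^sub>L Q) o\<^sub>L R x)"], intro conjI ballI allI)
    fix x assume "x \<in> U" then show "(R has_derivative (\<lambda>h. - (R x o\<^sub>L (Q o\<^sub>L h o\<^sub>L Q) o\<^sub>L R x))) (at x)" by (rule hR)
  next
    fix v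
    have "cls U R Q (\<lambda>x. 0 - (R x o\<^sub>L (Q o\<^sub>L v o\<^sub>L Q) o\<^sub>L R x))"
      by (intro cls.cdiff cls.cc cls.cmul cls.cR)
    then show "cls U R Q (\<lambda>x. - (R x o\<^sub>L (Q o\<^sub>L v o\<^sub>L Q) o\<^sub>L R x))" by simp
  qed
next
  case (cadd f g)
  then obtain Df Dg where f: "\<forall>x\<in>U. (f has_derivative Df x) (at x)" "\<forall>v. cls U R Q (\<lambda>x. Df x v)"
    and g: "\<forall>x\<in>U. (g has_derivative Dg x) (at x)" "\<forall>v. cls U R Q (\<lambda>x. Dg x v)" by blast
  show ?case
    by (rule exI[of _ "\<lambda>x h. Df x h + Dg x h"]) (use f g in \<open>auto intro: has_derivative_add cls.cadd\<close>)
next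
  case (cdiff f g)
  then obtain Df Dg where f: "\<forall>x\<in>U. (f has_derivative Df x) (at x)" "\<forall>v. cls U R Q (\<lambda>x. Df x v)"
    and g: "\<forall>x\<in>U. (g has_derivative Dg x) (at x)" "\<forall>v. cls U R Q (\<lambda>x. Dg x v)" by blast
  show ?case
    by (rule exI[of _ "\<lambda>x h. Df x h - Dg x h"]) (use f g in \<open>auto intro: has_derivative_diff cls.cdiff\<close>)
next
  case (cmul f g)
  then obtain Df Dg where f: "\<forall>x\<in>U. (f has_derivative Df x) (at x)" "\<forall>v. cls U R Q (\<lambda>x. Df x v)"
    and g: "\<forall>x\<in>U. (g has_derivative Dg x) (at x)" "\<forall>v. cls U R Q (\<lambda>x. Dg x v)" by blast
  show ?case
  proof (rule exI[of _ "\<lambda>x h. (f x o\<^sub>L Dg x h) + (Df x h o\<^sub>L g x)"], intro conjI ballI allI)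
    fix x assume "x \<in> U"
    then show "((\<lambda>x. f x o\<^sub>L g x) has_derivative (\<lambda>h. (f x o\<^sub>L Dg x h) + (Df x h o\<^sub>L g x))) (at x)"
    proof -
      have "(f has_derivative Df x) (at x)" "(g has_derivative Dg x) (at x)" using f g \<open>x \<in> U\<close> by auto
      from bounded_bilinear.FDERIV[OF bounded_bilinear_blinfun_compose this] show ?thesis .
    qed
  next
    fix v show "cls U R Q (\<lambda>x. (f x o\<^sub>L Dg x v) + (Df x v o\<^sub>L g x))"
      using f g cmul.hyps by (intro cls.cadd cls.cmul) auto
  qed
next
  case (ceq f g)
  then obtain Df where f: "\<forall>x\<in>U. (f has_derivative Df x) (at x)" "\<forall>v. cls U R Q (\<lambda>x. Df x v)" by blast
  show ?case
  proof (rule exI[of _ Df], intro conjI ballI allI)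
    fix x assume x: "x \<in> U"
    show "(g has_derivative Df x) (at x)"
      by (rule has_derivative_transform_within_open[OF _ U x]) (use f x ceq.hyps in auto)
  qed (use f in auto)
qed

lemma cls_Cinf:
  assumes U: "open U"
    and hR: "\<And>x. x \<in> U \<Longrightarrow> (R has_derivative (\<lambda>h. - (R x o\<^sub>L (Q o\<^sub>L h o\<^sub>L Q) o\<^sub>L R x))) (at x)"
    and f: "cls U R Q f"
  shows "C_infinity_on U f"
  unfolding C_infinity_on_def
proof (rule exI[of _ "{g. cls U R Q g}"], intro conjI ballI allI)
  show "f \<in> {g. cls U R Q g}" using f by simp
  fix g assume "g \<in> {g. cls U R Q g}"
  then obtain D where D: "\<forall>x\<in>U. (g has_derivative D x) (at x)" "\<forall>v. cls U R Q (\<lambda>x. D x v)"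
    using cls_deriv[OF U hR] by blast
  show "g differentiable_on U"
    using D(1) by (auto simp: differentiable_on_def differentiable_def intro: has_derivative_at_withinI)
  fix v
  show "(\<lambda>x. frechet_derivative g (at x) v) \<in> {g. cls U R Q g}"
  proof (simp, rule cls.ceq[OF D(2)[rule_format, of v]])
    fix x assume "x \<in> U"
    then show "frechet_derivative g (at x) v = D x v" using D(1) frechet_derivative_at by metis
  qed
qed

context lsetup begin

lemma F_cls: "cls U R Q F"
proof -
  have "cls U R Q (\<lambda>t. (P o\<^sub>L t o\<^sub>L P) - (P o\<^sub>L t o\<^sub>L Q o\<^sub>L R t o\<^sub>L Q o\<^sub>L t o\<^sub>L P))"
    by (intro cls.cdiff cls.cmul cls.cc cls.ci cls.cR)
  then show ?thesis unfolding F_def[abs_def] .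
qed

lemma F_Cinf: "C_infinity_on U F"
  by (rule cls_Cinf[OF U_open R_deriv F_cls])

end



context lsetup begin

definition DF :: "('v \<Rightarrow>\<^sub>L 'v) \<Rightarrow> ('v \<Rightarrow>\<^sub>L 'v) \<Rightarrow> ('v \<Rightarrow>\<^sub>L 'v)" where
  "DF q h = (P o\<^sub>L h o\<^sub>L P) - (((P o\<^sub>L h o\<^sub>L Q o\<^sub>L R q o\<^sub>L Q o\<^sub>L q o\<^sub>L P)
     - (P o\<^sub>L q o\<^sub>L Q o\<^sub>L (R q o\<^sub>L (Q o\<^sub>L h o\<^sub>L Q) o\<^sub>L R q) o\<^sub>L Q o\<^sub>L q o\<^sub>L P))
     + (P o\<^sub>L q o\<^sub>L Q o\<^sub>L R q o\<^sub>L Q o\<^sub>L h o\<^sub>L P))"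

lemma DF_ap: "DF q h x = P (h (P x)) - (P (h (Q (R q (Q (q (P x)))))) - P (q (Q (R q (Q (h (Q (R q (Q (q (P x)))))))))) + P (q (Q (R q (Q (h (P x)))))))"
  by (simp add: DF_def blinfun.diff_left blinfun.add_left)

lemma F_deriv:
  assumes q: "q \<in> U"
  shows "(F has_derivative DF q) (at q)"
  unfolding F_def[abs_def]
  apply (rule has_derivative_eq_rhs)
   apply ((rule has_derivative_diff bounded_linear_imp_has_derivative[OF bounded_bilinear.bounded_linear_right[OF bounded_bilinear_blinfun_compose]] bounded_bilinear.FDERIV[OF bounded_bilinear_blinfun_compose] has_derivative_const has_derivative_ident R_deriv[OF q])+)
  apply (rule ext, rule blinfun_eqI)
  apply (simp add: DF_ap blinfun.diff_left blinfun.add_left blinfun.minus_left blinfun.diff_right blinfun.add_right blinfun.minus_right blinfun.zero_left)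
  done


definition Y :: "('v \<Rightarrow>\<^sub>L 'v) set" where
  "Y = {y. y \<in> E \<and> (\<forall>x. P (y (P x)) = y x)}"

lemma E_sub: "subspace E"
  unfolding subspace_def symH_def
  by (auto simp: blinfun.add_left blinfun.scaleR_left inner_add_left inner_add_right blinfun.add_right blinfun.scaleR_right)

lemma Y_sub: "subspace Y"
  unfolding subspace_def Y_def symH_def
  by (auto simp: blinfun.add_left blinfun.scaleR_left inner_add_left inner_add_right blinfun.add_right blinfun.scaleR_right)

lemma Yform:
  fixes y :: "'v \<Rightarrow>\<^sub>L 'v"
  assumes "\<forall>x. P (y (P x)) = y x"
  shows "y (Q z) = 0" "Q (y z) = 0" "P (y z) = y z" "y (P z) = y z"
proof -
  show "y (Q z) = 0" using assms[rule_format, of "Q z"] by (simp add: P_Q)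
  show "Q (y z) = 0" using assms[rule_format, of z] Q_P by metis
  show "P (y z) = y z" using assms[rule_format, of z] P_P by metis
  show "y (P z) = y z" using assms[rule_format, of "P z"] assms[rule_format, of z] P_P by metis
qed

lemma DF_s: "DF s h x = P (h (P x))"
  by (simp add: DF_ap s_P P_s blinfun.zero_right)

lemma DF_Y: assumes "y \<in> Y" shows "DF q y = y"
proof (rule blinfun_eqI)
  fix x
  have y: "\<forall>x. P (y (P x)) = y x" using assms by (simp add: Y_def)
  show "DF q y x = y x" using y by (simp add: DF_ap Yform[OF y] blinfun.zero_right)
qed

lemma E_sa: "t \<in> E \<Longrightarrow> inner (t x) y = inner x (t y)"
  by (simp add: symH_def)
lemma E_eqv: "t \<in> E \<Longrightarrow> h \<in> H \<Longrightarrow> t (\<rho> h x) = \<rho> h (t x)"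
  by (simp add: symH_def)

lemma R_sa': "q \<in> E \<Longrightarrow> q \<in> U \<Longrightarrow> inner (R q x) y = inner x (R q y)"
  using R_sa[of q] E_iff[of q] by (simp add: sa_def)
lemma R_eqv': "q \<in> E \<Longrightarrow> q \<in> U \<Longrightarrow> h \<in> H \<Longrightarrow> R q (\<rho> h x) = \<rho> h (R q x)"
  using R_eqv[of q] E_iff[of q] by (simp add: eqv_def)

lemma DF_in_Y:
  assumes qE: "q \<in> E" and qU: "q \<in> U" and vE: "v \<in> E"
  shows "DF q v \<in> Y"
  unfolding Y_def symH_def
proof (intro CollectI conjI allI ballI)
  fix x y
  show "inner (DF q v x) y = inner x (DF q v y)"
    by (simp add: DF_ap inner_diff_left inner_add_left inner_diff_right inner_add_right P_sym Q_sym
        E_sa[OF qE] E_sa[OF vE] R_sa'[OF qE qU])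
next
  fix h x assume h: "h \<in> H"
  show "DF q v (\<rho> h x) = \<rho> h (DF q v x)"
    by (simp add: DF_ap P_eqv[OF h] Q_eqv[OF h] E_eqv[OF qE h] E_eqv[OF vE h] R_eqv'[OF qE qU h]
        blinfun.diff_right blinfun.add_right)
next
  fix x show "P (DF q v (P x)) = DF q v x"
    by (simp add: DF_ap P_P blinfun.diff_right blinfun.add_right)
qed

lemma F_in_Y:
  assumes qE: "q \<in> E" and qU: "q \<in> U"
  shows "F q \<in> Y"
  unfolding Y_def symH_def
proof (intro CollectI conjI allI ballI)
  fix x y
  show "inner (F q x) y = inner x (F q y)"
    by (simp add: F_ap inner_diff_left inner_add_left inner_diff_right inner_add_right P_sym Q_sym
        E_sa[OF qE] R_sa'[OF qE qU])
next
  fix h x assume h: "h \<in> H"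
  show "F q (\<rho> h x) = \<rho> h (F q x)"
    by (simp add: F_ap P_eqv[OF h] Q_eqv[OF h] E_eqv[OF qE h] R_eqv'[OF qE qU h]
        blinfun.diff_right blinfun.add_right)
next
  fix x show "P (F q (P x)) = F q x"
    by (simp add: F_ap P_P blinfun.diff_right blinfun.add_right)
qed

lemma A_shift: fixes y :: "'v \<Rightarrow>\<^sub>L 'v" assumes "\<forall>x. P (y (P x)) = y x" shows "A (q - y) = A q"
  by (rule blinfun_eqI) (simp add: A_ap blinfun.diff_left blinfun.diff_right Yform[OF assms])

lemma U_shift: fixes y :: "'v \<Rightarrow>\<^sub>L 'v" assumes "\<forall>x. P (y (P x)) = y x" shows "q - y \<in> U \<longleftrightarrow> q \<in> U"
  by (simp add: U_def A_shift[OF assms])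

lemma F_shift:
  fixes y :: "'v \<Rightarrow>\<^sub>L 'v"
  assumes y: "\<forall>x. P (y (P x)) = y x"
  shows "F (q - y) = F q - y"
proof (rule blinfun_eqI)
  fix x
  have R: "R (q - y) = R q" by (simp add: R_def A_shift[OF y])
  show "F (q - y) x = (F q - y) x"
    by (simp add: F_ap R blinfun.diff_left blinfun.diff_right Yform[OF y])
qed

end



lemma zero_deriv:
  fixes \<gamma> :: "real \<Rightarrow> 'a::real_normed_vector" and f :: "'a \<Rightarrow> 'b::real_normed_vector"
  assumes g: "(\<gamma> has_vector_derivative v) (at 0)"
    and f: "(f has_derivative Df) (at (\<gamma> 0))"
    and e: "e > 0" and z: "\<And>t. \<bar>t\<bar> < e \<Longrightarrow> f (\<gamma> t) = 0"
  shows "Df v = 0"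
proof -
  have d1: "((\<lambda>t. f (\<gamma> t)) has_derivative (\<lambda>t. Df (t *\<^sub>R v))) (at 0)"
    using has_derivative_compose[OF g[unfolded has_vector_derivative_def] f] .
  have d0: "((\<lambda>t::real. 0::'b) has_derivative (\<lambda>t. 0)) (at 0)" by simp
  have d2: "((\<lambda>t. f (\<gamma> t)) has_derivative (\<lambda>t. 0)) (at 0)"
  proof (rule has_derivative_transform_within_open[OF d0, of "{-e<..<e}"])
    show "open {-e<..<e::real}" by simp
    show "(0::real) \<in> {-e<..<e}" using e by simp
    fix t :: real assume "t \<in> {-e<..<e}"
    then show "0 = f (\<gamma> t)" using z[of t] by (simp add: abs_less_iff)
  qed
  have "(\<lambda>t. Df (t *\<^sub>R v)) = (\<lambda>t. 0)" by (rule has_derivative_unique[OF d1 d2])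
  then show ?thesis by (metis scaleR_one)
qed

lemma curve_open:
  fixes \<gamma> :: "real \<Rightarrow> 'a::real_normed_vector"
  assumes g: "(\<gamma> has_vector_derivative v) (at 0)" and U: "open U" and g0: "\<gamma> 0 \<in> U"
  shows "\<exists>d>0. \<forall>t. \<bar>t\<bar> < d \<longrightarrow> \<gamma> t \<in> U"
proof -
  obtain r where r: "r > 0" "ball (\<gamma> 0) r \<subseteq> U" using U g0 open_contains_ball by blast
  have "continuous (at 0) \<gamma>" by (rule has_vector_derivative_continuous[OF g])
  then obtain d where d: "d > 0" "\<And>t. dist t 0 < d \<Longrightarrow> dist (\<gamma> t) (\<gamma> 0) < r"
    unfolding continuous_at_eps_delta using r(1) by blast
  show ?thesis
  proof (intro exI[of _ d] conjI allI impI d(1))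
    fix t :: real assume "\<bar>t\<bar> < d"
    then have "dist (\<gamma> t) (\<gamma> 0) < r" using d(2)[of t] by (simp add: dist_real_def)
    then show "\<gamma> t \<in> U" using r(2) by (auto simp: dist_commute)
  qed
qed

lemma lin_zero:
  fixes \<gamma> :: "real \<Rightarrow> 'a::real_normed_vector" and l :: "'a \<Rightarrow> 'b::real_normed_vector"
  assumes g: "(\<gamma> has_vector_derivative v) (at 0)" and l: "bounded_linear l"
    and e: "e > 0" and z: "\<And>t. t \<in> {-e<..<e} \<Longrightarrow> l (\<gamma> t) = 0"
  shows "l v = 0"
  by (rule zero_deriv[OF g bounded_linear_imp_has_derivative[OF l] e]) (use z in \<open>auto simp: abs_less_iff\<close>)

locale lsetup2 = lsetup H \<rho> s for H :: "(real^'n^'n) set" and \<rho> :: "real^'n^'n \<Rightarrow> ('v::euclidean_space \<Rightarrow>\<^sub>L 'v)" and s +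
  fixes G :: "(real^'n^'n) set" and \<rho>W :: "real^'n^'n \<Rightarrow> 'w::euclidean_space \<Rightarrow> 'w" and W :: "'w set"
    and g :: "real^'n^'n" and \<phi> :: "'v \<Rightarrow> 'w"
  assumes isrep: "is_rep H W \<rho>W"
    and gG: "g \<in> G" and Hc: "H = (\<lambda>k. g ** k ** matrix_inv g) ` H"
    and \<phi>lin: "linear \<phi>" and \<phi>bij: "bij_betw \<phi> K W"
    and \<phi>eq: "\<And>k x. k \<in> H \<Longrightarrow> x \<in> K \<Longrightarrow> \<rho>W (g ** k ** matrix_inv g) (\<phi> x) = \<phi> (\<rho> k x)"
begin

abbreviation "M \<equiv> symH_sigma G H \<rho> \<rho>W W"

lemma W_sub: "subspace W" using isrep by (simp add: is_rep_def)

lemma dim_bij: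
  fixes f :: "'a::euclidean_space \<Rightarrow> 'b::euclidean_space"
  assumes "linear f" "bij_betw f S T" "subspace S"
  shows "dim T = dim S"
proof -
  have sk: "span S = S" by (rule span_eq_iff[THEN iffD2, OF assms(3)])
  have "dim (f ` S) = dim S"
  proof (rule dim_inj_real)
    show "linear f" by (rule assms(1))
    show "inj_on f (span S)" unfolding sk using assms(2) by (simp add: bij_betw_def)
  qed
  then show ?thesis using assms by (simp add: bij_betw_def)
qed

lemma dim_W: "dim W = dim K" by (rule dim_bij[OF \<phi>lin \<phi>bij K_sub])

lemma M_iff:
  assumes qE: "q \<in> E" and qU: "q \<in> U"
  shows "q \<in> M \<longleftrightarrow> F q = 0"
proof
  assume "q \<in> M"
  then obtain \<psi> where "linear \<psi>" "bij_betw \<psi> (kernel q) W"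
    by (auto simp: symH_sigma_def rep_iso_G_def)
  then have "dim W = dim (kernel q)" using dim_bij kernel_sub by blast
  then show "F q = 0" using Z_eq_K[OF qU] dim_W by simp
next
  assume F0: "F q = 0"
  have bP: "bij_betw (blinfun_apply P) (kernel q) K" using P_bij_ker[OF qU] F0_Z[OF F0] by simp
  have "rep_iso_G G H (\<lambda>h. blinfun_apply (\<rho> h)) (kernel q) \<rho>W W"
    unfolding rep_iso_G_def
  proof (intro bexI[OF _ gG] conjI exI[of _ "\<lambda>x. \<phi> (P x)"] ballI)
    show "H = (\<lambda>k. g ** k ** matrix_inv g) ` H" by (rule Hc)
    show "linear (\<lambda>x. \<phi> (P x))"
      using linear_compose[OF bounded_linear.linear[OF blinfun.bounded_linear_right] \<phi>lin, of P]
      by (simp add: o_def)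
    show "bij_betw (\<lambda>x. \<phi> (P x)) (kernel q) W"
      using bij_betw_trans[OF bP \<phi>bij] by (simp add: o_def)
    fix k x assume k: "k \<in> H" and x: "x \<in> kernel q"
    show "\<rho>W (g ** k ** matrix_inv g) (\<phi> (P x)) = \<phi> (P (\<rho> k x))"
      using \<phi>eq[OF k P_K] by (simp add: P_eqv[OF k])
  qed
  then show "q \<in> M" using qE by (simp add: symH_sigma_def)
qed

lemma sM: "s \<in> M" using M_iff sE s_U
  by (metis (no_types, lifting) Z_eq_K dim_W \<phi>bij dim_bij \<phi>lin K_sub)

lemma F_s: "F s = 0" using M_iff[OF sE s_U] sM by simp

lemma T_sub:
  assumes v: "v \<in> tangent_space M s"
  shows "P (v (P x)) = 0"
proof -
  obtain \<gamma> e where e: "e > 0" and g0: "\<gamma> 0 = s" and gM: "\<forall>t\<in>{-e<..<e}. \<gamma> t \<in> M"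
    and gd: "(\<gamma> has_vector_derivative v) (at 0)"
    using v unfolding tangent_space_def by blast
  obtain d where d: "d > 0" "\<And>t. \<bar>t\<bar> < d \<Longrightarrow> \<gamma> t \<in> U"
    using curve_open[OF gd U_open] g0 s_U by auto
  have "DF s v = 0"
  proof (rule zero_deriv[OF gd _ _])
    show "(F has_derivative DF s) (at (\<gamma> 0))" using F_deriv[OF s_U] g0 by simp
    show "min e d > 0" using e d by simp
    fix t :: real assume t: "\<bar>t\<bar> < min e d"
    then have "\<gamma> t \<in> M" using gM by (auto simp: abs_less_iff)
    moreover have "\<gamma> t \<in> U" using d t by simp
    moreover have "\<gamma> t \<in> E" using \<open>\<gamma> t \<in> M\<close> by (simp add: symH_sigma_def)
    ultimately show "F (\<gamma> t) = 0" using M_iff by blast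
  qed
  then show ?thesis using DF_s[of v x] by simp
qed

lemma T_E:
  assumes v: "v \<in> tangent_space M s"
  shows "v \<in> E"
proof -
  obtain \<gamma> e where e: "e > 0" and g0: "\<gamma> 0 = s" and gM: "\<forall>t\<in>{-e<..<e}. \<gamma> t \<in> M"
    and gd: "(\<gamma> has_vector_derivative v) (at 0)"
    using v unfolding tangent_space_def by blast
  have gE: "\<gamma> t \<in> E" if "t \<in> {-e<..<e}" for t using gM that by (auto simp: symH_sigma_def)
  have ap: "bounded_linear (\<lambda>t::'v \<Rightarrow>\<^sub>L 'v. blinfun_apply t x)" for x
    by (rule bounded_bilinear.bounded_linear_left[OF bounded_bilinear_blinfun_apply])
  have "inner (v x) y - inner x (v y) = 0" for x y
  proof (rule lin_zero[OF gd _ e, where l = "\<lambda>t. inner (t x) y - inner x (t y)"])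
    show "bounded_linear (\<lambda>t::'v \<Rightarrow>\<^sub>L 'v. inner (t x) y - inner x (t y))"
      by (intro bounded_linear_sub bounded_linear_compose[OF bounded_linear_inner_left ap]
          bounded_linear_compose[OF bounded_linear_inner_right ap])
    fix t assume "t \<in> {-e<..<e}"
    then show "inner (\<gamma> t x) y - inner x (\<gamma> t y) = 0" using gE E_sa by simp
  qed
  moreover have "v (\<rho> h x) - \<rho> h (v x) = 0" if h: "h \<in> H" for h x
  proof (rule lin_zero[OF gd _ e, where l = "\<lambda>t. t (\<rho> h x) - \<rho> h (t x)"])
    show "bounded_linear (\<lambda>t::'v \<Rightarrow>\<^sub>L 'v. t (\<rho> h x) - \<rho> h (t x))"
      by (intro bounded_linear_sub ap bounded_linear_compose[OF blinfun.bounded_linear_right ap])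
    fix t assume "t \<in> {-e<..<e}"
    then show "\<gamma> t (\<rho> h x) - \<rho> h (\<gamma> t x) = 0" using gE E_eqv h by simp
  qed
  ultimately show ?thesis by (simp add: symH_def)
qed


lemma T_sup:
  assumes vE: "v \<in> E" and vP: "\<And>x. P (v (P x)) = 0"
  shows "v \<in> tangent_space M s"
proof -
  obtain r where r: "r > 0" "ball s r \<subseteq> U" using U_open s_U open_contains_ball by blast
  define e where "e = r / (norm v + 1)"
  have e: "e > 0" using r by (simp add: e_def add_nonneg_pos)
  define \<gamma> where "\<gamma> t = (s + t *\<^sub>R v) - F (s + t *\<^sub>R v)" for t
  have inM: "\<gamma> t \<in> M" if t: "t \<in> {-e<..<e}" for t
  proof -
    define q where "q = s + t *\<^sub>R v"
    have "\<bar>t\<bar> * norm v \<le> \<bar>t\<bar> * (norm v + 1)" by (simp add: mult_left_mono)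
    also have "\<dots> < e * (norm v + 1)" using t by (intro mult_strict_right_mono) (auto simp: add_nonneg_pos)
    also have "\<dots> = r" proof - have "norm v + 1 > 0" by (simp add: add_nonneg_pos) then show ?thesis by (simp add: e_def) qed
    finally have "dist s q < r" by (simp add: q_def dist_norm)
    then have qU: "q \<in> U" using r(2) by auto
    have qE: "q \<in> E" unfolding q_def using E_sub sE vE by (simp add: subspace_add subspace_scale)
    have FY: "F q \<in> Y" by (rule F_in_Y[OF qE qU])
    then have Fform: "\<forall>x. P (F q (P x)) = F q x" and FE: "F q \<in> E" by (auto simp: Y_def)
    have gU: "\<gamma> t \<in> U" unfolding \<gamma>_def q_def[symmetric] using U_shift[OF Fform] qU by simp
    have gE: "\<gamma> t \<in> E" unfolding \<gamma>_def q_def[symmetric] using E_sub qE FE by (simp add: subspace_diff)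
    have "F (\<gamma> t) = 0" unfolding \<gamma>_def q_def[symmetric] using F_shift[OF Fform] by simp
    then show ?thesis using M_iff[OF gE gU] by simp
  qed
  have g0: "\<gamma> 0 = s" by (simp add: \<gamma>_def F_s)
  have DF0: "DF s (t *\<^sub>R v) = 0" for t
    by (rule blinfun_eqI) (simp add: DF_s blinfun.scaleR_left vP blinfun.scaleR_right)
  have q': "((\<lambda>t. s + t *\<^sub>R v) has_derivative (\<lambda>t. t *\<^sub>R v)) (at 0)"
    by (auto intro!: derivative_eq_intros)
  have Fd: "(F has_derivative DF s) (at ((\<lambda>t. s + t *\<^sub>R v) 0))" using F_deriv[OF s_U] by simp
  have "(\<gamma> has_derivative (\<lambda>t. t *\<^sub>R v - DF s (t *\<^sub>R v))) (at 0)"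
    unfolding \<gamma>_def[abs_def] by (rule has_derivative_diff[OF q' has_derivative_compose[OF q' Fd]])
  then have "(\<gamma> has_vector_derivative v) (at 0)" unfolding has_vector_derivative_def by (simp add: DF0)
  then show ?thesis unfolding tangent_space_def using e g0 inM by blast
qed

lemma transv:
  assumes L: "subspace L" "L \<subseteq> E"
  shows "transverse_at E L M s \<longleftrightarrow>
     (\<forall>f\<in>symH_sub H \<rho> K. \<exists>l\<in>L. \<forall>x\<in>K. orth_proj K (blinfun_apply l x) = f x)"
proof
  assume tr: "transverse_at E L M s"
  show "\<forall>f\<in>symH_sub H \<rho> K. \<exists>l\<in>L. \<forall>x\<in>K. orth_proj K (blinfun_apply l x) = f x"
  proof
    fix f assume f: "f \<in> symH_sub H \<rho> K"
    have fK: "\<And>x. x \<in> K \<Longrightarrow> f x \<in> K" and fadd: "\<And>x y. x \<in> K \<Longrightarrow> y \<in> K \<Longrightarrow> f (x + y) = f x + f y"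
      and fsc: "\<And>c x. x \<in> K \<Longrightarrow> f (c *\<^sub>R x) = c *\<^sub>R f x"
      and fsym: "\<And>x y. x \<in> K \<Longrightarrow> y \<in> K \<Longrightarrow> inner (f x) y = inner x (f y)"
      and feq: "\<And>h x. h \<in> H \<Longrightarrow> x \<in> K \<Longrightarrow> f (\<rho> h x) = \<rho> h (f x)"
      using f by (auto simp: symH_sub_def)
    have lin: "linear (\<lambda>x. f (P x))"
      by (rule linearI) (simp_all add: blinfun.add_right blinfun.scaleR_right fadd fsc P_K)
    define ft where "ft = Blinfun (\<lambda>x. f (P x))"
    have ft_ap: "ft x = f (P x)" for x
      using lin by (simp add: ft_def bounded_linear_Blinfun_apply linear_conv_bounded_linear)
    have ftE: "ft \<in> E" unfolding symH_def
    proof (intro CollectI conjI allI ballI)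
      fix x y
      have "inner (f (P x)) y = inner (P y) (f (P x))" using P_inner[OF fK[OF P_K], of y] by (simp add: inner_commute)
      also have "\<dots> = inner (f (P y)) (P x)" using fsym[OF P_K P_K] by (simp add: inner_commute)
      also have "\<dots> = inner x (f (P y))" using P_inner[OF fK[OF P_K], of x] by (simp add: inner_commute)
      finally show "inner (ft x) y = inner x (ft y)" by (simp add: ft_ap)
    next
      fix h x assume h: "h \<in> H"
      show "ft (\<rho> h x) = \<rho> h (ft x)" by (simp add: ft_ap P_eqv[OF h] feq[OF h P_K])
    qed
    then obtain a l where al: "ft = a + l" "a \<in> tangent_space M s" "l \<in> L"
      using tr unfolding transverse_at_def by blast
    show "\<exists>l\<in>L. \<forall>x\<in>K. orth_proj K (blinfun_apply l x) = f x"
    proof (intro bexI[OF _ al(3)] ballI)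
      fix x assume x: "x \<in> K"
      have "P (ft x) = P (a x) + P (l x)" by (simp add: al(1) blinfun.add_left blinfun.add_right)
      moreover have "P (a x) = 0" using T_sub[OF al(2), of x] P_id[OF x] by simp
      moreover have "P (ft x) = f x" using ft_ap P_id[OF x] P_id[OF fK[OF x]] by simp
      ultimately show "orth_proj K (l x) = f x" by (simp add: P_ap)
    qed
  qed
next
  assume surj: "\<forall>f\<in>symH_sub H \<rho> K. \<exists>l\<in>L. \<forall>x\<in>K. orth_proj K (blinfun_apply l x) = f x"
  show "transverse_at E L M s" unfolding transverse_at_def
  proof (intro conjI sM)
    show "{a + b |a b. a \<in> tangent_space M s \<and> b \<in> L} = E"
    proof
      show "{a + b |a b. a \<in> tangent_space M s \<and> b \<in> L} \<subseteq> E"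
        using T_E L E_sub by (auto intro: subspace_add)
      show "E \<subseteq> {a + b |a b. a \<in> tangent_space M s \<and> b \<in> L}"
      proof
        fix e assume eE: "e \<in> E"
        define f where "f x = P (e x)" for x
        have "f \<in> symH_sub H \<rho> K" unfolding symH_sub_def
        proof (intro CollectI conjI allI ballI)
          fix x y assume x: "x \<in> K" and y: "y \<in> K"
          show "f (x + y) = f x + f y" by (simp add: f_def blinfun.add_right)
          have "inner (P (e x)) y = inner (e x) y" using P_inner[OF y] by simp
          also have "\<dots> = inner x (e y)" using E_sa[OF eE] by simp
          also have "\<dots> = inner x (P (e y))" using P_inner[OF x, of "e y"] by (simp add: inner_commute)
          finally show "inner (f x) y = inner x (f y)" by (simp add: f_def)
        next
          fix x assume "x \<in> K" then show "f x \<in> K" by (simp add: f_def P_K)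
        next
          fix c x show "f (c *\<^sub>R x) = c *\<^sub>R f x" by (simp add: f_def blinfun.scaleR_right)
        next
          fix h x assume h: "h \<in> H"
          show "f (\<rho> h x) = \<rho> h (f x)" by (simp add: f_def E_eqv[OF eE h] P_eqv[OF h])
        qed
        then obtain l where l: "l \<in> L" "\<And>x. x \<in> K \<Longrightarrow> orth_proj K (l x) = f x" using surj by blast
        define a where "a = e - l"
        have aE: "a \<in> E" unfolding a_def using E_sub eE l(1) L by (auto intro: subspace_diff)
        have "P (a (P x)) = 0" for x
        proof -
          have "P (l (P x)) = P (e (P x))" using l(2)[OF P_K, of x] by (simp add: f_def P_ap)
          then show ?thesis by (simp add: a_def blinfun.diff_left blinfun.diff_right)
        qed
        then have "a \<in> tangent_space M s" by (rule T_sup[OF aE])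
        moreover have "e = a + l" by (simp add: a_def)
        ultimately show "e \<in> {a + b |a b. a \<in> tangent_space M s \<and> b \<in> L}" using l(1) by blast
      qed
    qed
  qed
qed

end



context lsetup2 begin

definition \<psi> :: "'w \<Rightarrow> 'v" where "\<psi> = inv_into K \<phi>"
abbreviation "PW \<equiv> orth_proj W"
definition \<alpha> :: "real^'n^'n \<Rightarrow> real^'n^'n" where "\<alpha> k = g ** k ** matrix_inv g"

lemma phi_K: "k \<in> K \<Longrightarrow> \<phi> k \<in> W" using \<phi>bij by (auto simp: bij_betw_def)
lemma psi_K: "w \<in> W \<Longrightarrow> \<psi> w \<in> K" using \<phi>bij unfolding \<psi>_def bij_betw_def by (auto intro: inv_into_into)
lemma phi_psi: "w \<in> W \<Longrightarrow> \<phi> (\<psi> w) = w" using \<phi>bij unfolding \<psi>_def bij_betw_def by (auto intro: f_inv_into_f)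
lemma psi_phi: "k \<in> K \<Longrightarrow> \<psi> (\<phi> k) = k" using \<phi>bij unfolding \<psi>_def bij_betw_def by (auto intro: inv_into_f_f)

lemma phi_inj: "k1 \<in> K \<Longrightarrow> k2 \<in> K \<Longrightarrow> \<phi> k1 = \<phi> k2 \<Longrightarrow> k1 = k2"
  using \<phi>bij by (auto simp: bij_betw_def inj_on_def)

lemma psi_add: "w1 \<in> W \<Longrightarrow> w2 \<in> W \<Longrightarrow> \<psi> (w1 + w2) = \<psi> w1 + \<psi> w2"
proof -
  assume w: "w1 \<in> W" "w2 \<in> W"
  have "\<phi> (\<psi> w1 + \<psi> w2) = w1 + w2" using w by (simp add: linear_add[OF \<phi>lin] phi_psi)
  then have "\<psi> (w1 + w2) = \<psi> (\<phi> (\<psi> w1 + \<psi> w2))" by simp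
  also have "\<dots> = \<psi> w1 + \<psi> w2" using w K_sub psi_K by (simp add: psi_phi subspace_add)
  finally show ?thesis .
qed

lemma psi_scale: "w \<in> W \<Longrightarrow> \<psi> (c *\<^sub>R w) = c *\<^sub>R \<psi> w"
proof -
  assume w: "w \<in> W"
  have "\<phi> (c *\<^sub>R \<psi> w) = c *\<^sub>R w" using w by (simp add: linear_scale[OF \<phi>lin] phi_psi)
  then have "\<psi> (c *\<^sub>R w) = \<psi> (\<phi> (c *\<^sub>R \<psi> w))" by simp
  also have "\<dots> = c *\<^sub>R \<psi> w" using w K_sub psi_K by (simp add: psi_phi subspace_scale)
  finally show ?thesis .
qed

lemma PW: "PW x \<in> W" by (rule orth_proj(1)[OF W_sub])

lemma lin_psiPW: "linear (\<lambda>x. \<psi> (PW x))"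
  using linear_add[OF orth_proj_linear[OF W_sub]] linear_scale[OF orth_proj_linear[OF W_sub]]
  by (intro linearI) (simp_all add: psi_add psi_scale PW)

lemma alpha_H: "k \<in> H \<Longrightarrow> \<alpha> k \<in> H" using Hc unfolding \<alpha>_def by blast
lemma H_alpha: "h \<in> H \<Longrightarrow> \<exists>k\<in>H. h = \<alpha> k" using Hc unfolding \<alpha>_def by blast

lemma rhoW_W: "h \<in> H \<Longrightarrow> w \<in> W \<Longrightarrow> \<rho>W h w \<in> W" using isrep by (simp add: is_rep_def)

lemma phi_eqv: "k \<in> H \<Longrightarrow> x \<in> K \<Longrightarrow> \<rho>W (\<alpha> k) (\<phi> x) = \<phi> (\<rho> k x)"
  unfolding \<alpha>_def by (rule \<phi>eq)

lemma psi_eqv: "k \<in> H \<Longrightarrow> w \<in> W \<Longrightarrow> \<psi> (\<rho>W (\<alpha> k) w) = \<rho> k (\<psi> w)"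
proof -
  assume k: "k \<in> H" and w: "w \<in> W"
  have "\<rho>W (\<alpha> k) w = \<phi> (\<rho> k (\<psi> w))" using phi_eqv[OF k psi_K[OF w]] phi_psi[OF w] by simp
  then show ?thesis using psi_phi K_inv[OF k psi_K[OF w]] by simp
qed

definition b1 :: "'w \<Rightarrow> 'w \<Rightarrow> real" where "b1 x y = inner (\<psi> x) (\<psi> y)"

lemma b1_inv: "inv_inner H \<rho>W W b1"
  unfolding inv_inner_def b1_def
proof (intro conjI ballI allI impI)
  fix x y z assume "x \<in> W" "y \<in> W" "z \<in> W"
  then show "inner (\<psi> (x + y)) (\<psi> z) = inner (\<psi> x) (\<psi> z) + inner (\<psi> y) (\<psi> z)"
    by (simp add: psi_add inner_add_left)
next
  fix c x y assume "x \<in> W" "y \<in> W"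
  then show "inner (\<psi> (c *\<^sub>R x)) (\<psi> y) = c * inner (\<psi> x) (\<psi> y)" by (simp add: psi_scale)
next
  fix x assume x: "x \<in> W" "x \<noteq> 0"
  have "\<psi> x \<noteq> 0"
  proof
    assume "\<psi> x = 0"
    then have "\<phi> (\<psi> x) = 0" using linear_0[OF \<phi>lin] by simp
    then show False using x phi_psi by simp
  qed
  then show "inner (\<psi> x) (\<psi> x) > 0" by simp
next
  fix h x y assume h: "h \<in> H" and x: "x \<in> W" and y: "y \<in> W"
  obtain k where k: "k \<in> H" "h = \<alpha> k" using H_alpha[OF h] by blast
  show "inner (\<psi> (\<rho>W h x)) (\<psi> (\<rho>W h y)) = inner (\<psi> x) (\<psi> y)"
    using k x y by (simp add: psi_eqv rho_inner)
qed (simp add: inner_commute)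


context
  fixes b :: "'w \<Rightarrow> 'w \<Rightarrow> real"
  assumes binv: "inv_inner H \<rho>W W b"
begin

lemma b_sym: "x \<in> W \<Longrightarrow> y \<in> W \<Longrightarrow> b x y = b y x" using binv by (simp add: inv_inner_def)
lemma b_add1: "x \<in> W \<Longrightarrow> y \<in> W \<Longrightarrow> z \<in> W \<Longrightarrow> b (x + y) z = b x z + b y z" using binv by (simp add: inv_inner_def)
lemma b_sc1: "x \<in> W \<Longrightarrow> y \<in> W \<Longrightarrow> b (c *\<^sub>R x) y = c * b x y" using binv by (simp add: inv_inner_def)
lemma b_pos: "x \<in> W \<Longrightarrow> x \<noteq> 0 \<Longrightarrow> b x x > 0" using binv by (simp add: inv_inner_def)
lemma b_inv: "h \<in> H \<Longrightarrow> x \<in> W \<Longrightarrow> y \<in> W \<Longrightarrow> b (\<rho>W h x) (\<rho>W h y) = b x y" using binv by (simp add: inv_inner_def)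
lemma b_add2: "x \<in> W \<Longrightarrow> y \<in> W \<Longrightarrow> z \<in> W \<Longrightarrow> b x (y + z) = b x y + b x z"
  using W_sub by (simp add: b_sym[of x] b_add1 subspace_add)
lemma b_sc2: "x \<in> W \<Longrightarrow> y \<in> W \<Longrightarrow> b x (c *\<^sub>R y) = c * b x y"
  using W_sub by (simp add: b_sym[of x] b_sc1 subspace_scale)

lemma rr_ex:
  assumes a: "a \<in> W"
  shows "\<exists>!k0. k0 \<in> K \<and> (\<forall>k\<in>K. inner k0 k = b a (\<phi> k))"
proof -
  have lin: "linear (\<lambda>u. b a (\<phi> (P u)))"
  proof (rule linearI)
    fix x y
    show "b a (\<phi> (P (x + y))) = b a (\<phi> (P x)) + b a (\<phi> (P y))"
      using a by (simp add: blinfun.add_right linear_add[OF \<phi>lin] b_add2 phi_K P_K)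
  next
    fix c :: real and x
    show "b a (\<phi> (P (c *\<^sub>R x))) = c *\<^sub>R b a (\<phi> (P x))"
      using a by (simp add: blinfun.scaleR_right linear_scale[OF \<phi>lin] b_sc2 phi_K P_K)
  qed
  obtain w where w: "\<And>u. b a (\<phi> (P u)) = inner w u" using riesz_eucl[OF lin] by blast
  show ?thesis
  proof (rule ex1I[of _ "P w"])
    show "P w \<in> K \<and> (\<forall>k\<in>K. inner (P w) k = b a (\<phi> k))"
    proof (intro conjI ballI P_K)
      fix k assume k: "k \<in> K"
      show "inner (P w) k = b a (\<phi> k)" using w[of k] P_inner[OF k, of w] P_id[OF k] by simp
    qed
    fix k0 assume k0: "k0 \<in> K \<and> (\<forall>k\<in>K. inner k0 k = b a (\<phi> k))"
    have d: "k0 - P w \<in> K" using k0 P_K K_sub by (simp add: subspace_diff)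
    have "inner (k0 - P w) (k0 - P w) = inner k0 (k0 - P w) - inner (P w) (k0 - P w)"
      by (simp add: inner_diff_left)
    also have "\<dots> = 0" using k0 d w[of "k0 - P w"] P_inner[OF d, of w] P_id[OF d] by simp
    finally show "k0 = P w" by simp
  qed
qed

definition rr :: "'w \<Rightarrow> 'v" where
  "rr a = (THE k0. k0 \<in> K \<and> (\<forall>k\<in>K. inner k0 k = b a (\<phi> k)))"

lemma rr: "a \<in> W \<Longrightarrow> rr a \<in> K \<and> (\<forall>k\<in>K. inner (rr a) k = b a (\<phi> k))"
  unfolding rr_def by (rule theI'[OF rr_ex])

lemma rr_unique: "a \<in> W \<Longrightarrow> k0 \<in> K \<Longrightarrow> (\<And>k. k \<in> K \<Longrightarrow> inner k0 k = b a (\<phi> k)) \<Longrightarrow> rr a = k0"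
  using rr_ex[of a] rr[of a] by blast

definition r' :: "'w \<Rightarrow> 'v" where "r' a = rr (PW a)"

lemma r'_W: "a \<in> W \<Longrightarrow> r' a = rr a" by (simp add: r'_def orth_proj_id W_sub)
lemma r'_K: "r' a \<in> K" using rr[OF PW] by (simp add: r'_def)
lemma r'_prop: "a \<in> W \<Longrightarrow> k \<in> K \<Longrightarrow> inner (r' a) k = b a (\<phi> k)" using rr by (simp add: r'_W)

lemma r'_lin: "linear r'"
proof (rule linearI)
  fix x y
  show "r' (x + y) = r' x + r' y"
    unfolding r'_def
  proof (rule rr_unique)
    show "PW (x + y) \<in> W" by (rule PW)
    show "rr (PW x) + rr (PW y) \<in> K" using rr[OF PW] K_sub by (simp add: subspace_add)
    fix k assume k: "k \<in> K"
    show "inner (rr (PW x) + rr (PW y)) k = b (PW (x + y)) (\<phi> k)"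
      using rr[OF PW] k by (simp add: inner_add_left linear_add[OF orth_proj_linear[OF W_sub]] b_add1 PW phi_K)
  qed
next
  fix c :: real and x
  show "r' (c *\<^sub>R x) = c *\<^sub>R r' x"
    unfolding r'_def
  proof (rule rr_unique)
    show "PW (c *\<^sub>R x) \<in> W" by (rule PW)
    show "c *\<^sub>R rr (PW x) \<in> K" using rr[OF PW] K_sub by (simp add: subspace_scale)
    fix k assume k: "k \<in> K"
    show "inner (c *\<^sub>R rr (PW x)) k = b (PW (c *\<^sub>R x)) (\<phi> k)"
      using rr[OF PW] k by (simp add: linear_scale[OF orth_proj_linear[OF W_sub]] b_sc1 PW phi_K)
  qed
qed

lemma r'_inj: "inj_on r' W"
proof -
  have "a = 0" if a: "a \<in> W" "r' a = 0" for a
  proof (rule ccontr)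
    assume "a \<noteq> 0"
    then have "b a a > 0" using b_pos a by simp
    moreover have "b a a = inner (r' a) (\<psi> a)" using r'_prop[OF a(1) psi_K[OF a(1)]] phi_psi[OF a(1)] by simp
    ultimately show False using a by simp
  qed
  then show ?thesis
    using linear_inj_on_iff_eq_0[OF r'_lin W_sub] by blast
qed

lemma r'_img: "r' ` W = K"
proof -
  have sW: "span W = W" by (rule span_eq_iff[THEN iffD2, OF W_sub])
  have "dim (r' ` W) = dim W"
  proof (rule dim_inj_real[OF r'_lin])
    show "inj_on r' (span W)" unfolding sW by (rule r'_inj)
  qed
  then have d: "dim (r' ` W) = dim K" using dim_W by simp
  have sub: "r' ` W \<subseteq> K" using r'_K by auto
  have "subspace (r' ` W)" using linear_subspace_image[OF r'_lin W_sub] .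
  then show ?thesis using subspace_dim_equal[OF _ K_sub sub] d by simp
qed

definition ri :: "'v \<Rightarrow> 'w" where "ri = inv_into W r'"

lemma ri_K: "z \<in> K \<Longrightarrow> ri z \<in> W \<and> r' (ri z) = z"
  using r'_img unfolding ri_def by (auto intro: inv_into_into f_inv_into_f)
lemma ri_r': "a \<in> W \<Longrightarrow> ri (r' a) = a"
  using r'_inj unfolding ri_def by (simp add: inv_into_f_f)

lemma ri_add: "z1 \<in> K \<Longrightarrow> z2 \<in> K \<Longrightarrow> ri (z1 + z2) = ri z1 + ri z2"
proof -
  assume z: "z1 \<in> K" "z2 \<in> K"
  have "r' (ri z1 + ri z2) = z1 + z2" using z ri_K by (simp add: linear_add[OF r'_lin])
  then have "ri (z1 + z2) = ri (r' (ri z1 + ri z2))" by simp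
  also have "\<dots> = ri z1 + ri z2" using z ri_K W_sub by (simp add: ri_r' subspace_add)
  finally show ?thesis .
qed

lemma ri_scale: "z \<in> K \<Longrightarrow> ri (c *\<^sub>R z) = c *\<^sub>R ri z"
proof -
  assume z: "z \<in> K"
  have "r' (c *\<^sub>R ri z) = c *\<^sub>R z" using z ri_K by (simp add: linear_scale[OF r'_lin])
  then have "ri (c *\<^sub>R z) = ri (r' (c *\<^sub>R ri z))" by simp
  also have "\<dots> = c *\<^sub>R ri z" using z ri_K W_sub by (simp add: ri_r' subspace_scale)
  finally show ?thesis .
qed

lemma r'_eqv:
  assumes k: "k \<in> H" and a: "a \<in> W"
  shows "r' (\<rho>W (\<alpha> k) a) = \<rho> k (r' a)"
proof -
  obtain h' where h': "h' \<in> H" "\<And>x. \<rho> k (\<rho> h' x) = x" "\<And>x. \<rho> h' (\<rho> k x) = x" using rho_inv[OF k] by blast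
  have aW: "\<rho>W (\<alpha> k) a \<in> W" by (rule rhoW_W[OF alpha_H[OF k] a])
  show ?thesis unfolding r'_W[OF aW]
  proof (rule rr_unique[OF aW])
    show "\<rho> k (r' a) \<in> K" by (rule K_inv[OF k r'_K])
    fix k' assume k': "k' \<in> K"
    have k'': "\<rho> h' k' \<in> K" by (rule K_inv[OF h'(1) k'])
    have "inner (\<rho> k (r' a)) k' = inner (\<rho> k (r' a)) (\<rho> k (\<rho> h' k'))" by (simp add: h')
    also have "\<dots> = inner (r' a) (\<rho> h' k')" by (rule rho_inner[OF k])
    also have "\<dots> = b a (\<phi> (\<rho> h' k'))" by (rule r'_prop[OF a k''])
    also have "\<dots> = b (\<rho>W (\<alpha> k) a) (\<rho>W (\<alpha> k) (\<phi> (\<rho> h' k')))"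
      by (rule b_inv[OF alpha_H[OF k] a phi_K[OF k''], symmetric])
    also have "\<rho>W (\<alpha> k) (\<phi> (\<rho> h' k')) = \<phi> k'" using phi_eqv[OF k k''] h' by simp
    finally show "inner (\<rho> k (r' a)) k' = b (\<rho>W (\<alpha> k) a) (\<phi> k')" .
  qed
qed

lemma ri_eqv:
  assumes k: "k \<in> H" and z: "z \<in> K"
  shows "ri (\<rho> k z) = \<rho>W (\<alpha> k) (ri z)"
proof -
  have w: "\<rho>W (\<alpha> k) (ri z) \<in> W" using rhoW_W[OF alpha_H[OF k]] ri_K[OF z] by simp
  have "r' (\<rho>W (\<alpha> k) (ri z)) = \<rho> k z" using r'_eqv[OF k] ri_K[OF z] by simp
  then show ?thesis using ri_r'[OF w] by simp
qed

lemma rhoW_add: "h \<in> H \<Longrightarrow> x \<in> W \<Longrightarrow> y \<in> W \<Longrightarrow> \<rho>W h (x + y) = \<rho>W h x + \<rho>W h y"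
  using isrep by (simp add: is_rep_def)
lemma rhoW_sc: "h \<in> H \<Longrightarrow> x \<in> W \<Longrightarrow> \<rho>W h (c *\<^sub>R x) = c *\<^sub>R \<rho>W h x"
  using isrep by (simp add: is_rep_def)
lemma rhoW_0: "h \<in> H \<Longrightarrow> \<rho>W h 0 = 0"
  using rhoW_sc[of h 0 0] W_sub by (simp add: subspace_0)
lemma b_0l: "y \<in> W \<Longrightarrow> b 0 y = 0" using b_sc1[of y y 0] by simp
lemma b_0r: "x \<in> W \<Longrightarrow> b x 0 = 0" using b_sc2[of x x 0] by simp

abbreviation "Sym \<equiv> sym_rep H \<rho>W W b"

lemma Sym_iff: "f \<in> Sym \<longleftrightarrow> (\<forall>x\<in>W. f x \<in> W) \<and> (\<forall>x. (\<forall>w\<in>W. inner x w = 0) \<longrightarrow> f x = 0) \<and>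
      (\<forall>x\<in>W. \<forall>y\<in>W. b (f x) y = b x (f y)) \<and> (\<forall>k\<in>H. \<forall>x\<in>W. f (\<rho>W k x) = \<rho>W k (f x))"
  by (simp add: sym_rep_def)

lemma Sym_sub: "subspace Sym"
  unfolding subspace_def
proof (intro conjI ballI allI)
  show "0 \<in> Sym" unfolding Sym_iff using W_sub by (simp add: subspace_0 b_0l b_0r rhoW_0)
next
  fix f g assume f: "f \<in> Sym" and g: "g \<in> Sym"
  show "f + g \<in> Sym" unfolding Sym_iff
  proof (intro conjI ballI allI impI)
    fix x assume x: "x \<in> W"
    then show "(f + g) x \<in> W" using f g W_sub by (simp add: Sym_iff blinfun.add_left subspace_add)
    fix y assume y: "y \<in> W"
    show "b ((f + g) x) y = b x ((f + g) y)"
      using f g x y by (simp add: Sym_iff blinfun.add_left b_add1 b_add2)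
  next
    fix x assume "\<forall>w\<in>W. inner x w = 0"
    then show "(f + g) x = 0" using f g by (simp add: Sym_iff blinfun.add_left)
  next
    fix k x assume k: "k \<in> H" and x: "x \<in> W"
    show "(f + g) (\<rho>W k x) = \<rho>W k ((f + g) x)" using f g k x by (simp add: Sym_iff blinfun.add_left rhoW_add)
  qed
next
  fix c :: real and f assume f: "f \<in> Sym"
  show "c *\<^sub>R f \<in> Sym" unfolding Sym_iff
  proof (intro conjI ballI allI impI)
    fix x assume x: "x \<in> W"
    then show "(c *\<^sub>R f) x \<in> W" using f W_sub by (simp add: Sym_iff blinfun.scaleR_left subspace_scale)
    fix y assume y: "y \<in> W"
    show "b ((c *\<^sub>R f) x) y = b x ((c *\<^sub>R f) y)"
      using f x y by (simp add: Sym_iff blinfun.scaleR_left b_sc1 b_sc2)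
  next
    fix x assume "\<forall>w\<in>W. inner x w = 0"
    then show "(c *\<^sub>R f) x = 0" using f by (simp add: Sym_iff blinfun.scaleR_left)
  next
    fix k x assume k: "k \<in> H" and x: "x \<in> W"
    show "(c *\<^sub>R f) (\<rho>W k x) = \<rho>W k ((c *\<^sub>R f) x)" using f k x by (simp add: Sym_iff blinfun.scaleR_left rhoW_sc)
  qed
qed

lemma Sym_PW: "f \<in> Sym \<Longrightarrow> f (PW x) = f x"
proof -
  assume f: "f \<in> Sym"
  have "\<forall>w\<in>W. inner (x - PW x) w = 0" using orth_proj(2)[OF W_sub] by blast
  then have "f (x - PW x) = 0" using f by (simp add: Sym_iff)
  then show ?thesis by (simp add: blinfun.diff_right)
qed

definition Th :: "('w \<Rightarrow>\<^sub>L 'w) \<Rightarrow> ('v \<Rightarrow>\<^sub>L 'v)" where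
  "Th f = Blinfun (\<lambda>u. r' (f (\<phi> (P u))))"

lemma Th_ap: "Th f u = r' (f (\<phi> (P u)))"
proof -
  have "linear (\<lambda>u. r' (f (\<phi> (P u))))"
    by (rule linearI) (simp_all add: blinfun.add_right blinfun.scaleR_right linear_add[OF \<phi>lin]
        linear_scale[OF \<phi>lin] linear_add[OF r'_lin] linear_scale[OF r'_lin])
  then show ?thesis by (simp add: Th_def bounded_linear_Blinfun_apply linear_conv_bounded_linear)
qed

lemma Th_lin: "linear Th"
  by (rule linearI; rule blinfun_eqI) (simp_all add: Th_ap blinfun.add_left blinfun.scaleR_left linear_add[OF r'_lin] linear_scale[OF r'_lin])

lemma Th_Y: assumes f: "f \<in> Sym" shows "Th f \<in> Y"
  unfolding Y_def symH_def
proof (intro CollectI conjI allI ballI)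
  have fW: "\<And>x. x \<in> W \<Longrightarrow> f x \<in> W" using f by (simp add: Sym_iff)
  have fs: "\<And>x y. x \<in> W \<Longrightarrow> y \<in> W \<Longrightarrow> b (f x) y = b x (f y)" using f by (simp add: Sym_iff)
  have fe: "\<And>k x. k \<in> H \<Longrightarrow> x \<in> W \<Longrightarrow> f (\<rho>W k x) = \<rho>W k (f x)" using f by (simp add: Sym_iff)
  fix x y
  have A: "inner (r' (f (\<phi> (P x)))) y = b (f (\<phi> (P x))) (\<phi> (P y))"
  proof -
    have "inner (r' (f (\<phi> (P x)))) y = inner (r' (f (\<phi> (P x)))) (P y)"
      using P_inner[of "r' (f (\<phi> (P x)))" y, OF r'_K] by (simp add: inner_commute)
    also have "\<dots> = b (f (\<phi> (P x))) (\<phi> (P y))" by (rule r'_prop[OF fW[OF phi_K[OF P_K]] P_K])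
    finally show ?thesis .
  qed
  have B: "inner x (r' (f (\<phi> (P y)))) = b (f (\<phi> (P y))) (\<phi> (P x))"
  proof -
    have "inner x (r' (f (\<phi> (P y)))) = inner (r' (f (\<phi> (P y)))) (P x)"
      using P_inner[of "r' (f (\<phi> (P y)))" x, OF r'_K] by (simp add: inner_commute)
    also have "\<dots> = b (f (\<phi> (P y))) (\<phi> (P x))" by (rule r'_prop[OF fW[OF phi_K[OF P_K]] P_K])
    finally show ?thesis .
  qed
  have C: "b (f (\<phi> (P x))) (\<phi> (P y)) = b (f (\<phi> (P y))) (\<phi> (P x))"
    using fs[OF phi_K[OF P_K] phi_K[OF P_K], of x y] b_sym[OF phi_K[OF P_K] fW[OF phi_K[OF P_K]], of x y] by simp
  show "inner (Th f x) y = inner x (Th f y)" using A B C by (simp add: Th_ap)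
next
  fix h x assume h: "h \<in> H"
  have fe: "\<And>k x. k \<in> H \<Longrightarrow> x \<in> W \<Longrightarrow> f (\<rho>W k x) = \<rho>W k (f x)" using f by (simp add: Sym_iff)
  have fW: "\<And>x. x \<in> W \<Longrightarrow> f x \<in> W" using f by (simp add: Sym_iff)
  show "Th f (\<rho> h x) = \<rho> h (Th f x)"
    by (simp add: Th_ap P_eqv[OF h] phi_eqv[OF h P_K, symmetric] fe[OF alpha_H[OF h] phi_K[OF P_K]]
        r'_eqv[OF h fW[OF phi_K[OF P_K]]])
next
  fix x show "P (Th f (P x)) = Th f x" by (simp add: Th_ap P_P P_id[OF r'_K])
qed

lemma Th_inj: "inj_on Th Sym"
proof (rule inj_onI)
  fix f1 f2 assume f1: "f1 \<in> Sym" and f2: "f2 \<in> Sym" and eq: "Th f1 = Th f2"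
  have W: "f1 w = f2 w" if w: "w \<in> W" for w
  proof -
    have "Th f1 (\<psi> w) = Th f2 (\<psi> w)" using eq by simp
    then have "r' (f1 w) = r' (f2 w)" using w by (simp add: Th_ap P_id psi_K phi_psi)
    moreover have "f1 w \<in> W" "f2 w \<in> W" using f1 f2 w by (auto simp: Sym_iff)
    ultimately show ?thesis using r'_inj by (auto dest: inj_onD)
  qed
  show "f1 = f2"
  proof (rule blinfun_eqI)
    fix x show "f1 x = f2 x" using W[OF PW, of x] Sym_PW[OF f1] Sym_PW[OF f2] by simp
  qed
qed

lemma Th_surj: assumes y: "y \<in> Y" shows "y \<in> Th ` Sym"
proof -
  have yE: "y \<in> E" and yf: "\<forall>x. P (y (P x)) = y x" using y by (auto simp: Y_def)
  have yK: "\<And>z. y z \<in> K" using yf P_K by metis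
  have lin: "linear (\<lambda>w. ri (y (\<psi> (PW w))))"
  proof (rule linearI)
    fix u v
    show "ri (y (\<psi> (PW (u + v)))) = ri (y (\<psi> (PW u))) + ri (y (\<psi> (PW v)))"
      using linear_add[OF lin_psiPW] by (simp add: blinfun.add_right ri_add yK)
  next
    fix c :: real and u
    show "ri (y (\<psi> (PW (c *\<^sub>R u)))) = c *\<^sub>R ri (y (\<psi> (PW u)))"
      using linear_scale[OF lin_psiPW] by (simp add: blinfun.scaleR_right ri_scale yK)
  qed
  define f where "f = Blinfun (\<lambda>w. ri (y (\<psi> (PW w))))"
  have f_ap: "f w = ri (y (\<psi> (PW w)))" for w
    using lin by (simp add: f_def bounded_linear_Blinfun_apply linear_conv_bounded_linear)
  have fW: "f w \<in> W" for w using ri_K[OF yK] by (simp add: f_ap)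
  have rf: "r' (f w) = y (\<psi> (PW w))" for w using ri_K[OF yK] by (simp add: f_ap)
  have fb: "b (f x) z = inner (y (\<psi> x)) (\<psi> z)" if x: "x \<in> W" and z: "z \<in> W" for x z
  proof -
    have "inner (r' (f x)) (\<psi> z) = b (f x) (\<phi> (\<psi> z))" by (rule r'_prop[OF fW psi_K[OF z]])
    then show ?thesis using x z by (simp add: rf phi_psi orth_proj_id W_sub)
  qed
  have fS: "f \<in> Sym" unfolding Sym_iff
  proof (intro conjI ballI allI impI)
    fix x assume x: "x \<in> W" show "f x \<in> W" by (rule fW)
    fix z assume z: "z \<in> W"
    have "b (f x) z = inner (y (\<psi> x)) (\<psi> z)" by (rule fb[OF x z])
    also have "\<dots> = inner (y (\<psi> z)) (\<psi> x)" using E_sa[OF yE] by (simp add: inner_commute)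
    also have "\<dots> = b (f z) x" by (rule fb[OF z x, symmetric])
    also have "\<dots> = b x (f z)" by (rule b_sym[OF fW x])
    finally show "b (f x) z = b x (f z)" .
  next
    fix x assume "\<forall>w\<in>W. inner x w = 0"
    then have "PW x = 0" by (simp add: orth_proj_orth W_sub)
    moreover have "\<psi> 0 = 0" using psi_phi[OF subspace_0[OF K_sub]] linear_0[OF \<phi>lin] by simp
    moreover have "ri 0 = 0" using ri_r'[OF subspace_0[OF W_sub]] linear_0[OF r'_lin] by simp
    ultimately show "f x = 0" by (simp add: f_ap)
  next
    fix h x assume h: "h \<in> H" and x: "x \<in> W"
    obtain k where k: "k \<in> H" "h = \<alpha> k" using H_alpha[OF h] by blast
    have hx: "\<rho>W h x \<in> W" by (rule rhoW_W[OF h x])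
    have "f (\<rho>W h x) = ri (y (\<psi> (\<rho>W (\<alpha> k) x)))" using hx k by (simp add: f_ap orth_proj_id W_sub)
    also have "\<dots> = ri (\<rho> k (y (\<psi> x)))" using x k by (simp add: psi_eqv E_eqv[OF yE])
    also have "\<dots> = \<rho>W (\<alpha> k) (ri (y (\<psi> x)))" by (rule ri_eqv[OF k(1) yK])
    finally show "f (\<rho>W h x) = \<rho>W h (f x)" using x k by (simp add: f_ap orth_proj_id W_sub)
  qed
  have "Th f = y"
  proof (rule blinfun_eqI)
    fix u
    have "Th f u = y (\<psi> (\<phi> (P u)))" by (simp add: Th_ap rf orth_proj_id W_sub phi_K P_K)
    also have "\<dots> = y u" using yf Yform(4)[OF yf] by (simp add: psi_phi P_K)
    finally show "Th f u = y u" .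
  qed
  then show ?thesis using fS by blast
qed

lemma dim_Y_Sym: "dim Y = dim Sym"
proof -
  have sS: "span Sym = Sym" by (rule span_eq_iff[THEN iffD2, OF Sym_sub])
  have "dim (Th ` Sym) = dim Sym"
  proof (rule dim_inj_real[OF Th_lin])
    show "inj_on Th (span Sym)" unfolding sS by (rule Th_inj)
  qed
  moreover have "Th ` Sym = Y" using Th_Y Th_surj by blast
  ultimately show ?thesis by simp
qed

end

lemma dim_Y: "dim Y = d_sigma H \<rho>W W"
proof -
  have "inv_inner H \<rho>W W (SOME b. inv_inner H \<rho>W W b)" by (rule someI[of "inv_inner H \<rho>W W" b1, OF b1_inv])
  then show ?thesis unfolding d_sigma_def by (rule dim_Y_Sym)
qed

end



context lsetup2 begin

lemma chart:
  "\<exists>U F (Y::('v \<Rightarrow>\<^sub>L 'v) set). open U \<and> s \<in> U \<and> subspace Y \<and> dim Y = d_sigma H \<rho>W W \<and> C_infinity_on U F \<and>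
        (\<forall>q\<in>E \<inter> U. F q \<in> Y \<and> frechet_derivative F (at q) ` E = Y) \<and>
        M \<inter> U = {q \<in> E \<inter> U. F q = 0}"
proof (intro exI conjI ballI)
  show "open U" by (rule U_open)
  show "s \<in> U" by (rule s_U)
  show "subspace Y" by (rule Y_sub)
  show "dim Y = d_sigma H \<rho>W W" by (rule dim_Y)
  show "C_infinity_on U F" by (rule F_Cinf)
  fix q assume q: "q \<in> E \<inter> U"
  show "F q \<in> Y" using q by (auto intro: F_in_Y)
  have fd: "frechet_derivative F (at q) = DF q" using F_deriv q frechet_derivative_at by (metis IntD2)
  show "frechet_derivative F (at q) ` E = Y"
  proof
    show "frechet_derivative F (at q) ` E \<subseteq> Y" using q DF_in_Y by (auto simp: fd)
    show "Y \<subseteq> frechet_derivative F (at q) ` E"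
    proof
      fix y assume y: "y \<in> Y"
      then have "y = DF q y" "y \<in> E" using DF_Y by (auto simp: Y_def)
      then show "y \<in> frechet_derivative F (at q) ` E" by (auto simp: fd)
    qed
  qed
next
  show "M \<inter> U = {q \<in> E \<inter> U. F q = 0}"
    using M_iff by (auto simp: symH_sigma_def)
qed

end

lemma symH_subspace: "subspace (symH H \<rho>)"
  unfolding subspace_def symH_def
  by (auto simp: blinfun.add_left blinfun.scaleR_left inner_add_left inner_add_right blinfun.add_right blinfun.scaleR_right)

theorem lemma3p13:
  fixes G H :: "(real^'n^'n) set"
    and \<rho> :: "real^'n^'n \<Rightarrow> ('v::euclidean_space \<Rightarrow>\<^sub>L 'v)"
    and W :: "'w::euclidean_space set"
    and \<rho>W :: "real^'n^'n \<Rightarrow> 'w \<Rightarrow> 'w"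
  assumes "compact_lie_group G"
    and "closed_subgroup H G"
    and "orth_rep H \<rho>"
    and "is_rep H W \<rho>W"
  shows "submanifold_codim (symH H \<rho>) (symH_sigma G H \<rho> \<rho>W W) (d_sigma H \<rho>W W) \<and>
    (\<forall>s L. s \<in> symH_sigma G H \<rho> \<rho>W W \<longrightarrow> subspace L \<longrightarrow> L \<subseteq> symH H \<rho> \<longrightarrow>
      (transverse_at (symH H \<rho>) L (symH_sigma G H \<rho> \<rho>W W) s \<longleftrightarrow>
       (\<forall>f\<in>symH_sub H \<rho> (kernel s).
          \<exists>l\<in>L. \<forall>x\<in>kernel s. orth_proj (kernel s) (blinfun_apply l x) = f x)))"
proof -
  have mg: "matrix_group H" using assms(2) by (simp add: closed_subgroup_def)
  have loc: "\<exists>g \<phi>. lsetup2 H \<rho> s G \<rho>W W g \<phi>" if s: "s \<in> symH_sigma G H \<rho> \<rho>W W" for s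
  proof -
    have sE: "s \<in> symH H \<rho>" and iso: "rep_iso_G G H (\<lambda>h. blinfun_apply (\<rho> h)) (kernel s) \<rho>W W"
      using s by (auto simp: symH_sigma_def)
    obtain g \<phi> where "g \<in> G" "H = (\<lambda>k. g ** k ** matrix_inv g) ` H" "linear \<phi>" "bij_betw \<phi> (kernel s) W"
      "\<And>k x. k \<in> H \<Longrightarrow> x \<in> kernel s \<Longrightarrow> \<rho>W (g ** k ** matrix_inv g) (\<phi> x) = \<phi> (\<rho> k x)"
      using iso unfolding rep_iso_G_def by blast
    then have "lsetup2 H \<rho> s G \<rho>W W g \<phi>"
      by (intro lsetup2.intro lsetup.intro lsetup2_axioms.intro mg assms(3) sE assms(4)) auto
    then show ?thesis by blast
  qed
  have P1: "submanifold_codim (symH H \<rho>) (symH_sigma G H \<rho> \<rho>W W) (d_sigma H \<rho>W W)"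
    unfolding submanifold_codim_def
  proof (intro conjI ballI symH_subspace)
    show "symH_sigma G H \<rho> \<rho>W W \<subseteq> symH H \<rho>" by (auto simp: symH_sigma_def)
    fix p assume p: "p \<in> symH_sigma G H \<rho> \<rho>W W"
    obtain g \<phi> where l: "lsetup2 H \<rho> p G \<rho>W W g \<phi>" using loc[OF p] by blast
    show "\<exists>U (F::('v \<Rightarrow>\<^sub>L 'v) \<Rightarrow> ('v \<Rightarrow>\<^sub>L 'v)) Y. open U \<and> p \<in> U \<and> subspace Y \<and> dim Y = d_sigma H \<rho>W W \<and> C_infinity_on U F \<and>
        (\<forall>q\<in>symH H \<rho> \<inter> U. F q \<in> Y \<and> frechet_derivative F (at q) ` symH H \<rho> = Y) \<and>
        symH_sigma G H \<rho> \<rho>W W \<inter> U = {q \<in> symH H \<rho> \<inter> U. F q = 0}"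
      by (rule lsetup2.chart[OF l])
  qed
  have P2: "\<forall>s L. s \<in> symH_sigma G H \<rho> \<rho>W W \<longrightarrow> subspace L \<longrightarrow> L \<subseteq> symH H \<rho> \<longrightarrow>
      (transverse_at (symH H \<rho>) L (symH_sigma G H \<rho> \<rho>W W) s \<longleftrightarrow>
       (\<forall>f\<in>symH_sub H \<rho> (kernel s).
          \<exists>l\<in>L. \<forall>x\<in>kernel s. orth_proj (kernel s) (blinfun_apply l x) = f x))"
  proof (intro allI impI)
    fix s L assume s: "s \<in> symH_sigma G H \<rho> \<rho>W W" and L: "subspace L" "L \<subseteq> symH H \<rho>"
    obtain g \<phi> where l: "lsetup2 H \<rho> s G \<rho>W W g \<phi>" using loc[OF s] by blast
    show "transverse_at (symH H \<rho>) L (symH_sigma G H \<rho> \<rho>W W) s \<longleftrightarrow>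
       (\<forall>f\<in>symH_sub H \<rho> (kernel s).
          \<exists>l\<in>L. \<forall>x\<in>kernel s. orth_proj (kernel s) (blinfun_apply l x) = f x)"
      by (rule lsetup2.transv[OF l L])
  qed
  show ?thesis using P1 P2 by blast
qed



end
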